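(* Consider an original formation of $n$ heterogeneous agents as described in the context, with given gains, whose closed loop is locally exponentially stable at the desired configuration $p^*$ (in relative coordinates). A new agent $n+1$ (either a distance agent or a bearing agent) is merged unilaterally by adding the edges $(n+1,1)$ and $(n+1,2)$, both controlled by agent $n+1$ (with terms of agent $n+1$'s type) with gains $k_\ell>0$ and $k_{\ell+1}>0$ respectively, with desired position $p^*_{n+1}$ such that $p^*_1,p^*_2,p^*_{n+1}$ are not collinear; the control laws of agents $1,\dots,n$ are unchanged. Then for any $k_\ell,k_{\ell+1}>0$ the resulting $(n+1)$-agent closed-loop system is locally exponentially stable at the extended desired configuration, i.e. $\zeta=(p_2-p_1,\dots,p_{n+1}-p_1)$ converges locally exponentially to $\zeta^*=(p^*_2-p^*_1,\dots,p^*_{n+1}-p^*_1)$.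
   Context: Agents $i$ have positions $p_i\in\mathbb{R}^2$ and dynamics $\dot p_i=u_i$. For $i\neq j$ let $z_{ij}=p_j-p_i$. The information flow is a directed graph with vertex set $\{1,\dots,n\}$ and edge set $\mathcal{E}$; each agent is either a distance agent or a bearing agent. A desired configuration $p^*=(p^*_1,\dots,p^*_n)$ with distinct points is given, and $z^*_{ij}=p^*_j-p^*_i$. An edge $(i,j)$ is controlled by its tail $i$ with a gain $k>0$ and contributes to $u_i$ the term - if $i$ is a distance agent: $k\,\dfrac{\|z_{ij}\|^2-\|z^*_{ij}\|^2}{2\|z^*_{ij}\|^2}\,z_{ij}$; - if $i$ is a bearing agent: $k\,\|z^*_{ij}\|\left(\dfrac{z_{ij}}{\|z_{ij}\|}-\dfrac{z^*_{ij}}{\|z^*_{ij}\|}\right)$. Each $u_i$ is the sum of the terms of the outgoing edges of $i$ ($u_i=0$ if there are none). Since the closed loop depends only on relative positions, it induces an autonomous system for $\zeta=(p_2-p_1,\dots,p_n-p_1)$; "locally exponentially stable at $p^*$" means $\zeta^*=(p^*_2-p^*_1,\dots,p^*_n-p^*_1)$ is a locally exponentially stable equilibrium of this system. *)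

theory Defs
  imports "HOL-Analysis.Analysis"
begin

type_synonym pt = "real^2"

text \<open>Contribution of edge (i,j) to u_i. The flag isd is True for a distance agent,
  False for a bearing agent; k is the gain, z = p_j - p_i, zs = p*_j - p*_i.\<close>
definition edge_term :: "bool \<Rightarrow> real \<Rightarrow> pt \<Rightarrow> pt \<Rightarrow> pt" where
  "edge_term isd k z zs =
     (if isd then (k * (norm z ^ 2 - norm zs ^ 2) / (2 * norm zs ^ 2)) *\<^sub>R z
      else (k * norm zs) *\<^sub>R ((1 / norm z) *\<^sub>R z - (1 / norm zs) *\<^sub>R zs))"

definition control ::
  "nat \<Rightarrow> (nat \<times> nat) set \<Rightarrow> (nat \<Rightarrow> bool) \<Rightarrow> (nat \<times> nat \<Rightarrow> real) \<Rightarrow> (nat \<Rightarrow> pt)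
     \<Rightarrow> (nat \<Rightarrow> pt) \<Rightarrow> nat \<Rightarrow> pt" where
  "control n E isd k ps p i =
     (\<Sum>j\<in>{1..n}. if (i, j) \<in> E then edge_term (isd i) (k (i, j)) (p j - p i) (ps j - ps i) else 0)"

text \<open>Relative coordinates: zeta j = p_j - p_1 for j = 2..n. A configuration
  representing zeta is obtained by putting p_1 = 0.\<close>
definition conf_of :: "(nat \<Rightarrow> pt) \<Rightarrow> nat \<Rightarrow> pt" where
  "conf_of \<zeta> = (\<lambda>i. if i = 1 then 0 else \<zeta> i)"

text \<open>Induced autonomous vector field for zeta: d/dt (p_j - p_1) = u_j - u_1.\<close>
definition rel_field ::
  "nat \<Rightarrow> (nat \<times> nat) set \<Rightarrow> (nat \<Rightarrow> bool) \<Rightarrow> (nat \<times> nat \<Rightarrow> real) \<Rightarrow> (nat \<Rightarrow> pt)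
     \<Rightarrow> (nat \<Rightarrow> pt) \<Rightarrow> nat \<Rightarrow> pt" where
  "rel_field n E isd k ps \<zeta> j =
     control n E isd k ps (conf_of \<zeta>) j - control n E isd k ps (conf_of \<zeta>) 1"

definition rel_norm :: "nat \<Rightarrow> (nat \<Rightarrow> pt) \<Rightarrow> real" where
  "rel_norm n \<zeta> = sqrt (\<Sum>j\<in>{2..n}. (norm (\<zeta> j))\<^sup>2)"

definition rel_star :: "(nat \<Rightarrow> pt) \<Rightarrow> nat \<Rightarrow> pt" where
  "rel_star ps = (\<lambda>j. ps j - ps 1)"

definition is_solution ::
  "nat \<Rightarrow> (nat \<times> nat) set \<Rightarrow> (nat \<Rightarrow> bool) \<Rightarrow> (nat \<times> nat \<Rightarrow> real) \<Rightarrow> (nat \<Rightarrow> pt)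
     \<Rightarrow> (real \<Rightarrow> nat \<Rightarrow> pt) \<Rightarrow> real \<Rightarrow> bool" where
  "is_solution n E isd k ps x T \<longleftrightarrow>
     (\<forall>t\<in>{0..T}. \<forall>j\<in>{2..n}.
        ((\<lambda>s. x s j) has_vector_derivative rel_field n E isd k ps (x t) j) (at t within {0..T}))"

definition loc_exp_stable ::
  "nat \<Rightarrow> (nat \<times> nat) set \<Rightarrow> (nat \<Rightarrow> bool) \<Rightarrow> (nat \<times> nat \<Rightarrow> real) \<Rightarrow> (nat \<Rightarrow> pt) \<Rightarrow> bool" where
  "loc_exp_stable n E isd k ps \<longleftrightarrow>
     (\<exists>\<delta>>0. \<exists>c>0. \<exists>r>0. \<forall>x0.
        rel_norm n (\<lambda>j. x0 j - rel_star ps j) < \<delta> \<longrightarrow>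
          (\<exists>x. (\<forall>j\<in>{2..n}. x 0 j = x0 j) \<and> (\<forall>T\<ge>0. is_solution n E isd k ps x T)) \<and>
          (\<forall>x T. T \<ge> 0 \<longrightarrow> is_solution n E isd k ps x T \<longrightarrow> (\<forall>j\<in>{2..n}. x 0 j = x0 j) \<longrightarrow>
             (\<forall>t\<in>{0..T}. rel_norm n (\<lambda>j. x t j - rel_star ps j)
                \<le> c * rel_norm n (\<lambda>j. x0 j - rel_star ps j) * exp (- r * t))))"

end

theory Submission
  imports Defs
begin

lemma inner2: "(x::real^2) \<bullet> y = (x$1)*(y$1) + (x$2)*(y$2)"
  by (simp add: inner_vec_def sum_2)

lemma normsq2: "(norm (x::real^2))^2 = (x$1)^2 + (x$2)^2"
  unfolding power2_norm_eq_inner inner2 by (simp add: power2_eq_square)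

lemma vec2_eqI: "(x::real^2)$1 = y$1 \<Longrightarrow> x$2 = y$2 \<Longrightarrow> x = y"
  by (metis exhaust_2 vec_eq_iff)

definition det2 :: "real^2 \<Rightarrow> real^2 \<Rightarrow> real" where
  "det2 u v = (u$1)*(v$2) - (u$2)*(v$1)"

lemma det_ineq:
  fixes u v e :: "real^2"
  shows "(det2 u v)^2 * (norm e)^2 \<le> ((u\<bullet>e)^2 + (v\<bullet>e)^2) * ((norm u)^2 + (norm v)^2)"
proof -
  define p where "p = u\<bullet>e" define q where "q = v\<bullet>e"
  have "((u\<bullet>e)^2 + (v\<bullet>e)^2) * ((norm u)^2 + (norm v)^2) - (det2 u v)^2 * (norm e)^2
     = (p*(u$1) + q*(v$1))^2 + (p*(u$2)+q*(v$2))^2"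
    unfolding normsq2 det2_def p_def q_def inner2 by (simp add: power2_eq_square algebra_simps)
  moreover have "(p*(u$1) + q*(v$1))^2 + (p*(u$2)+q*(v$2))^2 \<ge> 0" by simp
  ultimately show ?thesis by linarith
qed

lemma det_ineq2:
  fixes u v e :: "real^2"
  shows "(det2 u v)^2 * (norm e)^2 \<le> ((det2 u e)^2 + (det2 v e)^2) * ((norm u)^2 + (norm v)^2)"
proof -
  define p where "p = det2 u e" define q where "q = det2 v e"
  have "((det2 u e)^2 + (det2 v e)^2) * ((norm u)^2 + (norm v)^2) - (det2 u v)^2 * (norm e)^2
     = (p*(u$1) + q*(v$1))^2 + (p*(u$2)+q*(v$2))^2"
    unfolding normsq2 det2_def p_def q_def by (simp add: power2_eq_square algebra_simps)
  moreover have "(p*(u$1) + q*(v$1))^2 + (p*(u$2)+q*(v$2))^2 \<ge> 0" by simp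
  ultimately show ?thesis by linarith
qed

lemma noncol_det:
  fixes a b c :: "real^2"
  assumes "\<not> collinear {a, b, c}"
  shows "det2 (a - c) (b - c) \<noteq> 0"
proof
  assume d: "det2 (a - c) (b - c) = 0"
  define u where "u = a - c" define v where "v = b - c"
  have "collinear {0, u, v}"
  proof (cases "u = 0")
    case True then show ?thesis by (simp add: collinear_lemma)
  next
    case False
    then have nz: "(u$1)^2 + (u$2)^2 \<noteq> 0" using normsq2[of u] by auto
    define t where "t = (v \<bullet> u) / ((u$1)^2 + (u$2)^2)"
    have "v = t *\<^sub>R u"
    proof (rule vec2_eqI)
      have dd: "(u$1)*(v$2) = (u$2)*(v$1)" using d unfolding u_def[symmetric] v_def[symmetric] det2_def by simp
      show "v$1 = (t *\<^sub>R u)$1" using nz dd unfolding t_def inner2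
        by (simp add: field_simps power2_eq_square)
      show "v$2 = (t *\<^sub>R u)$2" using nz dd unfolding t_def inner2
        by (simp add: field_simps power2_eq_square)
    qed
    then show ?thesis by (auto simp: collinear_lemma)
  qed
  then have "collinear {a, c, b}"
    using collinear_3[of a c b] unfolding u_def v_def by simp
  then show False using assms by (simp add: insert_commute)
qed



lemma edge_zero: "zs \<noteq> 0 \<Longrightarrow> edge_term b k zs zs = 0"
  by (simp add: edge_term_def)

lemma unit_diff_bound:
  fixes z z' :: "'a::real_normed_vector"
  assumes "z \<noteq> 0" "z' \<noteq> 0"
  shows "norm ((1/norm z) *\<^sub>R z - (1/norm z') *\<^sub>R z') \<le> 2 * norm (z - z') / norm z"
proof -
  have eq: "(1/norm z) *\<^sub>R z - (1/norm z') *\<^sub>R z' = (1/norm z) *\<^sub>R (z - z') + ((1/norm z) - (1/norm z')) *\<^sub>R z'"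
    by (simp add: algebra_simps)
  have n1: "norm ((1/norm z) *\<^sub>R (z - z')) = norm (z - z') / norm z" by simp
  have "norm (((1/norm z) - (1/norm z')) *\<^sub>R z') = \<bar>1/norm z - 1/norm z'\<bar> * norm z'" by simp
  also have "\<dots> = \<bar>norm z' - norm z\<bar> / norm z"
    using assms by (simp add: field_simps abs_mult[symmetric] abs_div)
  also have "\<dots> \<le> norm (z - z') / norm z"
    using assms by (intro divide_right_mono) (auto simp: norm_triangle_ineq3 abs_minus_commute)
  finally have n2: "norm (((1/norm z) - (1/norm z')) *\<^sub>R z') \<le> norm (z - z') / norm z" .
  show ?thesis unfolding eq using norm_triangle_ineq[of "(1/norm z) *\<^sub>R (z - z')" "((1/norm z) - (1/norm z')) *\<^sub>R z'"] n1 n2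
    by linarith
qed

lemma ball_facts:
  fixes zs z :: "'a::real_normed_vector"
  assumes "z \<in> cball zs (norm zs / 2)"
  shows "norm z \<ge> norm zs / 2" "norm z \<le> 3/2 * norm zs"
proof -
  have "norm (zs - z) \<le> norm zs / 2" using assms by (simp add: dist_norm)
  then show "norm z \<ge> norm zs / 2" "norm z \<le> 3/2 * norm zs"
    using norm_triangle_ineq2[of zs z] norm_triangle_ineq3[of z zs] norm_minus_commute[of zs z] by auto
qed

lemma edge_lip:
  assumes "zs \<noteq> 0" "k > 0"
  shows "\<exists>L. L-lipschitz_on (cball zs (norm zs / 2)) (\<lambda>z. edge_term b k z zs)"
proof (cases b)
  case False
  define d where "d = norm zs"
  have d: "d > 0" using assms d_def by auto
  show ?thesis
  proof (intro exI lipschitz_onI)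
    fix z z' assume z: "z \<in> cball zs (norm zs / 2)" and z': "z' \<in> cball zs (norm zs / 2)"
    have nz: "norm z \<ge> d/2" "norm z' \<ge> d/2" using ball_facts[OF z] ball_facts[OF z'] d_def by auto
    then have nz0: "z \<noteq> 0" "z' \<noteq> 0" using d by auto
    have "dist (edge_term b k z zs) (edge_term b k z' zs)
        = norm ((k*d) *\<^sub>R ((1/norm z) *\<^sub>R z - (1/norm z') *\<^sub>R z'))"
      using False by (simp add: edge_term_def dist_norm d_def algebra_simps)
    also have "\<dots> = (k*d) * norm ((1/norm z) *\<^sub>R z - (1/norm z') *\<^sub>R z')"
      using assms d by simp
    also have "\<dots> \<le> (k*d) * (2 * norm (z - z') / norm z)"
      using unit_diff_bound[OF nz0] assms d by (intro mult_left_mono) auto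
    also have "\<dots> \<le> (k*d) * (2 * norm (z - z') / (d/2))"
      using nz d assms by (intro mult_left_mono divide_left_mono) (auto intro!: mult_pos_pos)
    also have "\<dots> = (4*k) * dist z z'" using d by (simp add: dist_norm field_simps)
    finally show "dist (edge_term b k z zs) (edge_term b k z' zs) \<le> (4*k) * dist z z'" .
  qed (use assms in auto)
next
  case True
  define d where "d = norm zs"
  have d: "d > 0" using assms d_def by auto
  define c where "c = k / (2*d^2)"
  have c: "c > 0" using d assms c_def by auto
  show ?thesis
  proof (intro exI lipschitz_onI)
    fix z z' assume z: "z \<in> cball zs (norm zs / 2)" and z': "z' \<in> cball zs (norm zs / 2)"
    have nz: "norm z \<le> 3/2*d" "norm z' \<le> 3/2*d" using ball_facts[OF z] ball_facts[OF z'] d_def by auto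
    have et: "edge_term b k y zs = (c * (norm y ^ 2 - d^2)) *\<^sub>R y" for y
      using True by (simp add: edge_term_def c_def d_def)
    have eq: "(c * (norm z ^ 2 - d^2)) *\<^sub>R z - (c * (norm z' ^ 2 - d^2)) *\<^sub>R z'
       = c *\<^sub>R (((norm z ^2 - norm z' ^2)) *\<^sub>R z + (norm z' ^2 - d^2) *\<^sub>R (z - z'))"
      by (simp add: algebra_simps)
    have a1: "\<bar>norm z ^2 - norm z' ^2\<bar> \<le> norm (z - z') * (3*d)"
    proof -
      have "\<bar>norm z ^2 - norm z' ^2\<bar> = \<bar>norm z - norm z'\<bar> * (norm z + norm z')"
      proof -
        have "norm z ^2 - norm z' ^2 = (norm z - norm z')*(norm z + norm z')" by (simp add: power2_eq_square algebra_simps)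
        then show ?thesis by (simp add: abs_mult)
      qed
      also have "\<dots> \<le> norm (z - z') * (3*d)"
        using nz by (intro mult_mono) (auto simp: norm_triangle_ineq3)
      finally show ?thesis .
    qed
    have a2: "\<bar>norm z' ^2 - d^2\<bar> \<le> 3*d^2"
    proof -
      have h: "norm z' ^2 \<le> (3/2*d)^2" using nz by (intro power_mono) auto
      have "(3/2*d)^2 = 9/4*d^2" by (simp add: power2_eq_square)
      moreover have "0 \<le> norm z' ^2" "0 \<le> d^2" by simp_all
      ultimately show ?thesis using h unfolding abs_le_iff by linarith
    qed
    have "dist (edge_term b k z zs) (edge_term b k z' zs)
       = c * norm (((norm z ^2 - norm z' ^2)) *\<^sub>R z + (norm z' ^2 - d^2) *\<^sub>R (z - z'))"
      unfolding dist_norm et eq using c by simp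
    also have "\<dots> \<le> c * (\<bar>norm z ^2 - norm z' ^2\<bar> * norm z + \<bar>norm z' ^2 - d^2\<bar> * norm (z - z'))"
      using c by (intro mult_left_mono) (auto intro: norm_triangle_le)
    also have "\<dots> \<le> c * ((norm (z - z') * (3*d)) * (3/2*d) + (3*d^2) * norm (z - z'))"
      using c a1 a2 nz d by (intro mult_left_mono add_mono mult_mono) auto
    also have "\<dots> = (c * (15/2) * d^2) * dist z z'" by (simp add: dist_norm power2_eq_square algebra_simps)
    finally show "dist (edge_term b k z zs) (edge_term b k z' zs) \<le> (c * (15/2) * d^2) * dist z z'" .
  qed (use c in auto)
qed



definition Qb :: "bool \<Rightarrow> real^2 \<Rightarrow> real^2 \<Rightarrow> real" where
  "Qb b zs e = (if b then (zs \<bullet> e)^2 else (det2 zs e)^2)"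

lemma lagrange2: "(norm (z::real^2))^2 * (norm w)^2 - (z \<bullet> w)^2 = (det2 z w)^2"
  unfolding normsq2 inner2 det2_def by (simp add: power2_eq_square algebra_simps)

lemma edge_neg:
  assumes "zs \<noteq> 0" "k > 0"
  shows "\<exists>\<alpha>>0. \<exists>K\<ge>0. \<forall>e. norm e \<le> norm zs / 2 \<longrightarrow>
           e \<bullet> edge_term b k (zs - e) zs \<le> - \<alpha> * Qb b zs e + K * norm e ^ 3"
proof (cases b)
  case True
  define d where "d = norm zs"
  have d: "d > 0" using assms d_def by auto
  have M: "\<forall>e. norm e \<le> norm zs / 2 \<longrightarrow> e \<bullet> edge_term b k (zs - e) zs \<le> - (k/d^2) * Qb b zs e + 3*k/(2*d) * norm e ^ 3"
  proof (intro allI impI)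
    fix e :: "real^2" assume e: "norm e \<le> norm zs / 2"
    define sv where "sv = zs \<bullet> e"
    have sb: "sv \<le> d * norm e" unfolding sv_def d_def using norm_cauchy_schwarz[of zs e] by simp
    have n2: "(norm (zs - e))^2 = d^2 - 2* sv + (norm e)^2"
      unfolding sv_def d_def power2_norm_eq_inner by (simp add: inner_diff algebra_simps inner_commute)
    have ip: "e \<bullet> (zs - e) = sv - (norm e)^2"
      unfolding sv_def power2_norm_eq_inner by (simp add: inner_diff inner_commute)
    have "e \<bullet> edge_term b k (zs - e) zs = (k * ((norm (zs - e))^2 - d^2) / (2*d^2)) * (e \<bullet> (zs - e))"
      using True by (simp add: edge_term_def d_def)
    also have "\<dots> = k/(2*d^2) * (-2* sv^2 + 3* sv*(norm e)^2 - (norm e)^4)"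
      unfolding n2 ip by (simp add: field_simps power2_eq_square power4_eq_xxxx)
    also have "\<dots> \<le> k/(2*d^2) * (-2* sv^2 + 3*(d*norm e)*(norm e)^2)"
    proof -
      have "3 * sv*(norm e)^2 \<le> 3*(d*norm e)*(norm e)^2" using sb by (intro mult_right_mono mult_left_mono) auto
      moreover have "(norm e)^4 \<ge> 0" by simp
      ultimately have "-2 * sv^2 + 3 * sv*(norm e)^2 - (norm e)^4 \<le> -2 * sv^2 + 3*(d*norm e)*(norm e)^2" by linarith
      then show ?thesis using assms d by (intro mult_left_mono) auto
    qed
    also have "\<dots> = - (k/d^2) * Qb b zs e + 3*k/(2*d) * norm e ^ 3"
      using True d unfolding Qb_def sv_def by (simp add: field_simps power2_eq_square power3_eq_cube)
    finally show "e \<bullet> edge_term b k (zs - e) zs \<le> - (k/d^2) * Qb b zs e + 3*k/(2*d) * norm e ^ 3" .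
  qed
  moreover have "k/d^2 > 0" "3*k/(2*d) \<ge> 0" "k/(4*d^2) > 0" using d assms by auto
  ultimately show ?thesis by blast
next
  case False
  define d where "d = norm zs"
  have d: "d > 0" using assms d_def by auto
  have M: "\<forall>e. norm e \<le> norm zs / 2 \<longrightarrow> e \<bullet> edge_term b k (zs - e) zs \<le> - (k/(4*d^2)) * Qb b zs e + 0 * norm e ^ 3"
  proof (intro allI impI)
    fix e :: "real^2" assume e: "norm e \<le> norm zs / 2"
    define z where "z = zs - e"
    define a where "a = norm z"
    define p where "p = z \<bullet> zs"
    define D where "D = det2 zs e"
    have zin: "z \<in> cball zs (norm zs / 2)" using e by (simp add: z_def dist_norm)
    have a: "a \<ge> d/2" "a \<le> 3/2*d" using ball_facts[OF zin] a_def d_def by auto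
    have apos: "a > 0" using a d by auto
    have ez: "e \<bullet> z = p - a^2" unfolding p_def a_def z_def power2_norm_eq_inner
      by (simp add: inner_diff inner_commute algebra_simps)
    have ezs: "e \<bullet> zs = d^2 - p" unfolding p_def d_def z_def power2_norm_eq_inner
      by (simp add: inner_diff inner_commute algebra_simps)
    have "e \<bullet> edge_term b k z zs = (k*d) * ((1/a) * (e \<bullet> z) - (1/d) * (e \<bullet> zs))"
      using False by (simp add: edge_term_def a_def d_def inner_diff_right)
    also have "\<dots> = - k * (a + d) * (a*d - p) / a"
      unfolding ez ezs using apos d by (simp add: field_simps power2_eq_square)
    finally have eq: "e \<bullet> edge_term b k z zs = - k * (a + d) * (a*d - p) / a" .
    have lag: "a^2 * d^2 - p^2 = D^2"
    proof -
      have "a^2*d^2 - p^2 = (det2 z zs)^2" using lagrange2[of z zs] a_def d_def p_def by simp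
      moreover have "det2 z zs = D" unfolding D_def z_def det2_def by (simp add: algebra_simps)
      ultimately show ?thesis by simp
    qed
    have cs: "\<bar>p\<bar> \<le> a*d" unfolding p_def a_def d_def by (rule Cauchy_Schwarz_ineq2)
    have key: "(a*d - p) * (2*a*d) \<ge> D^2"
    proof -
      have "D^2 = (a*d - p) * (a*d + p)" using lag by (simp add: power2_eq_square algebra_simps)
      also have "\<dots> \<le> (a*d - p) * (2*a*d)" using cs by (intro mult_left_mono) auto
      finally show ?thesis .
    qed
    have amp: "a*d - p \<ge> D^2 / (2*a*d)" using key apos d by (simp add: field_simps)
    have q0: "a*d - p \<ge> 0" using cs by auto
    have "- k * (a + d) * (a*d - p) / a \<le> - k * (a*d - p)"
    proof -
      have e1: "(a+d)*(a*d-p)/a = (a*d-p) + d*(a*d-p)/a" using apos by (simp add: field_simps)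
      have "d*(a*d-p)/a \<ge> 0" using q0 d apos by simp
      then have "(a*d - p) \<le> (a + d) * (a*d - p) / a" using e1 by linarith
      then have "k * (a*d - p) \<le> k * ((a + d) * (a*d - p) / a)" using assms by (intro mult_left_mono) auto
      moreover have "- k * (a + d) * (a*d - p) / a = - (k * ((a + d) * (a*d - p) / a))" by simp
      ultimately show ?thesis by linarith
    qed
    also have "\<dots> \<le> - k * (D^2 / (2*a*d))" using mult_left_mono[OF amp, of k] assms by simp
    also have "\<dots> \<le> - k * (D^2 / (3*d^2))"
    proof -
      have "2*a*d \<le> 3*d^2" using a d by (simp add: power2_eq_square)
      then have "D^2/(3*d^2) \<le> D^2/(2*a*d)" using apos d by (intro divide_left_mono) auto
      then show ?thesis using mult_left_mono[of "D^2/(3*d^2)" "D^2/(2*a*d)" k] assms by simp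
    qed
    also have "\<dots> \<le> - (k/(4*d^2)) * Qb b zs e + 0 * norm e ^ 3"
    proof -
      have X: "k*D^2/d^2 \<ge> 0" using assms by simp
      have e1: "k*(D^2/(3*d^2)) = (k*D^2/d^2)/3" by (simp add: field_simps)
      have e2: "(k/(4*d^2)) * D^2 = (k*D^2/d^2)/4" by (simp add: field_simps)
      have "Qb b zs e = D^2" using False unfolding Qb_def D_def by simp
      then show ?thesis using X e1 e2 by simp
    qed
    finally show "e \<bullet> edge_term b k (zs - e) zs \<le> - (k/(4*d^2)) * Qb b zs e + 0 * norm e ^ 3"
      using eq z_def by simp
  qed
  moreover have "k/d^2 > 0" "3*k/(2*d) \<ge> 0" "k/(4*d^2) > 0" using d assms by auto
  ultimately show ?thesis by blast
qed



locale mrg =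
  fixes n :: nat and E :: "(nat \<times> nat) set" and isd :: "nat \<Rightarrow> bool"
    and k :: "nat \<times> nat \<Rightarrow> real" and ps :: "nat \<Rightarrow> pt"
    and d :: bool and kl kl1 :: real and q :: pt
  assumes n2: "n \<ge> 2"
    and E_sub: "E \<subseteq> {(i, j). i \<in> {1..n} \<and> j \<in> {1..n} \<and> i \<noteq> j}"
    and k_pos: "\<forall>e\<in>E. k e > 0"
    and ps_distinct: "inj_on ps {1..n}"
    and kl_pos: "kl > 0" and kl1_pos: "kl1 > 0"
    and noncol: "\<not> collinear {ps 1, ps 2, q}"
begin

abbreviation "m \<equiv> Suc n"
abbreviation "E' \<equiv> E \<union> {(Suc n, 1), (Suc n, 2)}"
abbreviation "isd' \<equiv> isd(Suc n := d)"
abbreviation "k' \<equiv> k((Suc n, 1) := kl, (Suc n, 2) := kl1)"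
abbreviation "ps' \<equiv> ps(Suc n := q)"

definition U1 :: "(nat \<Rightarrow> pt) \<Rightarrow> pt" where
  "U1 \<zeta> = control n E isd k ps (conf_of \<zeta>) 1"

definition NEWF :: "(nat \<Rightarrow> pt) \<Rightarrow> pt" where
  "NEWF \<zeta> = edge_term d kl (- \<zeta> (Suc n)) (ps 1 - q) + edge_term d kl1 (\<zeta> 2 - \<zeta> (Suc n)) (ps 2 - q) - U1 \<zeta>"

lemma E_mem: "(i, j) \<in> E \<Longrightarrow> i \<in> {1..n} \<and> j \<in> {1..n} \<and> i \<noteq> j"
  using E_sub by auto

lemma control_old:
  assumes i: "i \<in> {1..n}"
  shows "control m E' isd' k' ps' p i = control n E isd k ps p i"
proof -
  have set: "{1..Suc n} = insert (Suc n) {1..n}" by auto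
  have notin: "(i, Suc n) \<notin> E'" using i E_mem[of i "Suc n"] by auto
  show ?thesis
    unfolding control_def set
    apply (subst sum.insert)
    using notin i
    by (auto intro!: sum.cong simp: E_mem)
qed

lemma control_new:
  "control m E' isd' k' ps' p m =
     edge_term d kl (p 1 - p m) (ps 1 - q) + edge_term d kl1 (p 2 - p m) (ps 2 - q)"
proof -
  have eq: "(if (m, j) \<in> E' then edge_term (isd' m) (k' (m, j)) (p j - p m) (ps' j - ps' m) else 0)
     = (if j = 1 then edge_term d kl (p 1 - p m) (ps 1 - q) else 0)
       + (if j = 2 then edge_term d kl1 (p 2 - p m) (ps 2 - q) else 0)" for j
    using E_mem[of m j] n2 by auto
  have "control m E' isd' k' ps' p m =
     (\<Sum>j\<in>{1..m}. (if j = 1 then edge_term d kl (p 1 - p m) (ps 1 - q) else 0)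
       + (if j = 2 then edge_term d kl1 (p 2 - p m) (ps 2 - q) else 0))"
    unfolding control_def eq ..
  also have "\<dots> = edge_term d kl (p 1 - p m) (ps 1 - q) + edge_term d kl1 (p 2 - p m) (ps 2 - q)"
    using n2 by (simp add: sum.distrib)
  finally show ?thesis .
qed

lemma rel_field_old:
  "j \<in> {1..n} \<Longrightarrow> rel_field m E' isd' k' ps' \<zeta> j = rel_field n E isd k ps \<zeta> j"
  unfolding rel_field_def using control_old[of j] control_old[of 1] n2 by auto

lemma rel_field_new: "rel_field m E' isd' k' ps' \<zeta> m = NEWF \<zeta>"
  unfolding rel_field_def NEWF_def U1_def using control_old[of 1] n2 control_new
  by (simp add: conf_of_def)

lemma is_solution_split:
  "is_solution m E' isd' k' ps' x T \<longleftrightarrow>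
     is_solution n E isd k ps x T \<and>
     (\<forall>t\<in>{0..T}. ((\<lambda>s. x s m) has_vector_derivative NEWF (x t)) (at t within {0..T}))"
proof -
  have set: "{2..Suc n} = insert (Suc n) {2..n}" using n2 by auto
  show ?thesis
    unfolding is_solution_def set using rel_field_old rel_field_new
    by (auto simp del: atLeastAtMost_iff) (simp_all add: atLeastAtMost_iff)
qed

lemma rel_norm_nonneg: "rel_norm N f \<ge> 0"
  unfolding rel_norm_def by (intro real_sqrt_ge_zero sum_nonneg) simp

lemma rel_norm_suc: "rel_norm m f = sqrt ((rel_norm n f)^2 + (norm (f m))^2)"
proof -
  have set: "{2..Suc n} = insert (Suc n) {2..n}" using n2 by auto
  have "(rel_norm n f)^2 = (\<Sum>j\<in>{2..n}. (norm (f j))\<^sup>2)"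
    unfolding rel_norm_def by (intro real_sqrt_pow2 sum_nonneg) simp
  then show ?thesis unfolding rel_norm_def set by simp
qed

lemma rel_norm_le_suc: "rel_norm n f \<le> rel_norm m f"
  unfolding rel_norm_suc by (simp add: real_le_rsqrt)

lemma rel_norm_new_le: "norm (f m) \<le> rel_norm m f"
  unfolding rel_norm_suc by (simp add: real_le_rsqrt)

lemma rel_norm_suc_le: "rel_norm m f \<le> rel_norm n f + norm (f m)"
  unfolding rel_norm_suc
  by (rule real_le_lsqrt) (auto simp: rel_norm_nonneg power2_sum)

lemma rel_norm_comp: "j \<in> {2..N} \<Longrightarrow> norm (f j) \<le> rel_norm N f"
proof -
  assume j: "j \<in> {2..N}"
  have "(norm (f j))^2 \<le> (\<Sum>i\<in>{2..N}. (norm (f i))\<^sup>2)"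
    using j by (intro member_le_sum) auto
  then show ?thesis unfolding rel_norm_def by (simp add: real_le_rsqrt)
qed

end


lemma comparison:
  fixes V V' :: "real \<Rightarrow> real"
  assumes T: "T \<ge> 0" and a: "a > 0" and \<beta>: "\<beta> > 0" and B: "B \<ge> 0"
    and nonneg: "\<forall>t\<in>{0..T}. V t \<ge> 0"
    and der: "\<forall>t\<in>{0..T}. (V has_real_derivative V' t) (at t within {0..T})"
    and ineq: "\<forall>t\<in>{0..T}. V t \<le> R \<longrightarrow> V' t \<le> -a * V t + B * exp (-\<beta> * t)"
    and init: "V 0 + B / (\<beta> - min a \<beta> / 2) < R"
  shows "\<forall>t\<in>{0..T}. V t \<le> (V 0 + B / (\<beta> - min a \<beta> / 2)) * exp (- (min a \<beta> / 2) * t)"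
proof -
  define \<gamma> where "\<gamma> = min a \<beta> / 2"
  define C where "C = \<beta> - \<gamma>"
  define Q0 where "Q0 = V 0 + B / C"
  have \<gamma>: "\<gamma> > 0" "\<gamma> \<le> a" "\<gamma> \<le> \<beta>/2" using a \<beta> unfolding \<gamma>_def by auto
  have C: "C > 0" using \<gamma> \<beta> unfolding C_def by auto
  have Q0R: "Q0 < R" using init unfolding Q0_def C_def \<gamma>_def .
  have V0: "V 0 \<le> Q0" unfolding Q0_def using B C by simp
  define Q where "Q s = V s * exp (\<gamma> * s) + (B / C) * exp (- C * s)" for s
  define Q' where "Q' s = V' s * exp (\<gamma> * s) + V s * (\<gamma> * exp (\<gamma> * s)) + (B / C) * (- C * exp (- C * s))" for s
  have Qder: "(Q has_real_derivative Q' s) (at s within {0..T})" if "s \<in> {0..T}" for s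
    unfolding Q_def Q'_def
    using der that by (auto intro!: derivative_eq_intros)
  have Q'neg: "Q' s \<le> 0" if "s \<in> {0..T}" "V s \<le> R" for s
  proof -
    have "V' s * exp (\<gamma> * s) \<le> (-a * V s + B * exp (-\<beta> * s)) * exp (\<gamma> * s)"
      using ineq that by (intro mult_right_mono) auto
    also have "\<dots> = -a * V s * exp (\<gamma> * s) + B * exp (- C * s)"
      unfolding C_def by (simp add: algebra_simps mult_exp_exp)
    finally have 1: "V' s * exp (\<gamma> * s) \<le> -a * V s * exp (\<gamma> * s) + B * exp (- C * s)" .
    have 2: "(\<gamma> - a) * (V s * exp (\<gamma> * s)) \<le> 0"
      using \<gamma> nonneg that by (intro mult_nonpos_nonneg) auto
    have 3: "(B / C) * (- C * exp (- C * s)) = - B * exp (- C * s)" using C by simp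
    show ?thesis unfolding Q'_def 3 using 1 2 by (simp add: algebra_simps)
  qed
  have dec: "V t \<le> Q0 * exp (- \<gamma> * t)" if t: "t \<in> {0..T}" and le: "\<forall>s\<in>{0..t}. V s \<le> R" for t
  proof -
    have "\<exists>x\<in>{0..t}. Q t - Q 0 = (\<lambda>h. Q' x * h) (t - 0)"
    proof (rule mvt_very_simple)
      show "0 \<le> t" using t by auto
      fix x assume "0 \<le> x" "x \<le> t"
      then have "(Q has_real_derivative Q' x) (at x within {0..t})"
        using Qder[of x] t by (auto intro: DERIV_subset)
      then show "(Q has_derivative (\<lambda>h. Q' x * h)) (at x within {0..t})"
        by (simp add: has_field_derivative_def)
    qed
    then obtain x where x: "x \<in> {0..t}" "Q t - Q 0 = Q' x * t" by auto
    have "Q' x \<le> 0" using Q'neg[of x] x le t by auto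
    then have "Q' x * t \<le> 0" using x by (simp add: mult_nonpos_nonneg)
    then have "Q t \<le> Q 0" using x by simp
    moreover have "Q 0 = Q0" unfolding Q_def Q0_def by simp
    moreover have "V t * exp (\<gamma> * t) \<le> Q t" unfolding Q_def using B C by simp
    ultimately have "V t * exp (\<gamma> * t) \<le> Q0" by simp
    then have "V t \<le> Q0 / exp (\<gamma> * t)" by (simp add: field_simps)
    then show ?thesis by (simp add: exp_minus field_simps)
  qed
  have cont: "continuous_on {0..T} V"
    using der by (auto intro!: DERIV_continuous simp: continuous_on_eq_continuous_within)
  define R' where "R' = (Q0 + R) / 2"
  have R': "Q0 < R'" "R' < R" using Q0R unfolding R'_def by auto
  have small: "\<forall>t\<in>{0..T}. V t < R'"
  proof (rule ccontr)
    assume "\<not> (\<forall>t\<in>{0..T}. V t < R')"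
    define S where "S = {0..T} \<inter> V -` {R'..}"
    have Sne: "S \<noteq> {}" using \<open>\<not> _\<close> unfolding S_def by auto
    have "closed S" unfolding S_def by (rule continuous_closed_preimage[OF cont]) auto
    moreover have "bounded S" unfolding S_def by (rule bounded_subset[of "{0..T}"]) auto
    ultimately have "compact S" using compact_eq_bounded_closed by blast
    then obtain t1 where t1: "t1 \<in> S" "\<forall>t\<in>S. t1 \<le> t" using compact_attains_inf[OF _ Sne] by blast
    have t1T: "t1 \<in> {0..T}" "V t1 \<ge> R'" using t1 unfolding S_def by auto
    have "\<exists>x. 0 \<le> x \<and> x \<le> t1 \<and> V x = R'"
      using R' V0 t1T by (intro IVT' continuous_on_subset[OF cont]) auto
    then obtain x where x: "0 \<le> x" "x \<le> t1" "V x = R'" by auto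
    have "x \<in> S" using x t1T unfolding S_def by auto
    then have "x = t1" using t1 x by force
    then have Vt1: "V t1 = R'" using x by simp
    have "\<forall>s\<in>{0..t1}. V s \<le> R"
    proof
      fix s assume s: "s \<in> {0..t1}"
      show "V s \<le> R"
      proof (cases "s = t1")
        case True then show ?thesis using Vt1 R' by simp
      next
        case False
        then have "s \<notin> S" using t1 s by force
        then show ?thesis using s t1T R' unfolding S_def by auto
      qed
    qed
    then have "V t1 \<le> Q0 * exp (- \<gamma> * t1)" using dec t1T by auto
    also have "\<dots> \<le> Q0 * 1"
    proof -
      have "0 \<le> V 0" using nonneg T by auto
      then have "0 \<le> Q0" using V0 by linarith
      then show ?thesis using t1T \<gamma> by (intro mult_left_mono) auto
    qed
    finally show False using Vt1 R' by simp
  qed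
  show ?thesis
  proof
    fix t assume t: "t \<in> {0..T}"
    have "\<forall>s\<in>{0..t}. V s \<le> R" using small t R' by force
    then have "V t \<le> Q0 * exp (- \<gamma> * t)" using dec t by auto
    then show "V t \<le> (V 0 + B / (\<beta> - min a \<beta> / 2)) * exp (- (min a \<beta> / 2) * t)"
      unfolding Q0_def C_def \<gamma>_def by simp
  qed
qed



lemma exp_lin_bound:
  fixes L t M :: real
  assumes "L > 0" "t \<ge> 0" "M \<ge> 0"
  shows "exp (-2*L*t) * (M * t) \<le> M / (2*L)"
proof -
  have "2*L*t \<le> exp (2*L*t)" using exp_ge_add_one_self[of "2*L*t"] by linarith
  then have "M * (2*L*t) \<le> M * exp (2*L*t)" using assms by (intro mult_left_mono) auto
  then have "M * t \<le> M * exp (2*L*t) / (2*L)" using assms by (simp add: field_simps)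
  then have "exp (-2*L*t) * (M * t) \<le> exp (-2*L*t) * (M * exp (2*L*t) / (2*L))"
    by (intro mult_left_mono) auto
  also have "\<dots> = M / (2*L)" by (simp add: exp_minus field_simps)
  finally show ?thesis .
qed

lemma ode_exists:
  fixes F :: "real \<Rightarrow> pt \<Rightarrow> pt" and w0 :: pt
  assumes L: "L > 0"
    and Mb: "\<forall>s\<ge>0. \<forall>u. norm (F s u) \<le> M"
    and lip: "\<forall>s\<ge>0. \<forall>u v. norm (F s u - F s v) \<le> L * norm (u - v)"
    and cont: "\<forall>y T. continuous_on {0..T} y \<longrightarrow> continuous_on {0..T} (\<lambda>s. F s (y s))"
  shows "\<exists>w. w 0 = w0 \<and> (\<forall>T t. t \<in> {0..T} \<longrightarrow> (w has_vector_derivative F t (w t)) (at t within {0..T}))"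
proof -
  have M0: "M \<ge> 0" using Mb norm_ge_zero order_trans by blast
  define h where "h g s = F s (exp (2*L* s) *\<^sub>R apply_bcontfun g s)" for g :: "real \<Rightarrow>\<^sub>C pt" and s
  define I where "I g t = integral {0..t} (h g)" for g t
  define ff where "ff g t = exp (-2*L*max 0 t) *\<^sub>R (w0 + I g (max 0 t))" for g t
  have hcont: "continuous_on {0..T} (h g)" for g T
  proof -
    have "continuous_on {0..T} (\<lambda>s. exp (2*L* s) *\<^sub>R apply_bcontfun g s)"
      by (intro continuous_on_scaleR continuous_on_apply_bcontfun) (auto intro!: continuous_intros)
    then show ?thesis unfolding h_def using cont by blast
  qed
  have hint: "h g integrable_on {0..T}" for g T
    using hcont by (rule integrable_continuous_interval)
  have hb: "s \<ge> 0 \<Longrightarrow> norm (h g s) \<le> M" for g s unfolding h_def using Mb by auto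
  have Ilip: "norm (I g t - I g t') \<le> M * \<bar>t - t'\<bar>" if "0 \<le> t" "0 \<le> t'" for g t t'
  proof -
    have *: "norm (I g t - I g t') \<le> M * (t' - t)" if "0 \<le> t" "t \<le> t'" for t t'
    proof -
      have "I g t + integral {t..t'} (h g) = I g t'"
        unfolding I_def using that hint[where g=g and T=t'] by (intro Henstock_Kurzweil_Integration.integral_combine) auto
      then have "I g t - I g t' = - integral {t..t'} (h g)" by (simp add: algebra_simps)
      then have "norm (I g t - I g t') = norm (integral {t..t'} (h g))" by simp
      also have "\<dots> \<le> M * (t' - t)"
        using that hb by (intro integral_bound continuous_on_subset[OF hcont[where g=g and T=t']]) auto
      finally show ?thesis .
    qed
    show ?thesis
    proof (cases "t \<le> t'")
      case True then show ?thesis using *[of t t'] that by simp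
    next
      case False then show ?thesis using *[of t' t] that by (simp add: norm_minus_commute)
    qed
  qed
  have I0: "I g 0 = 0" for g unfolding I_def by simp
  have ffb: "ff g \<in> bcontfun" for g
  proof (rule bcontfun_normI)
    have "M-lipschitz_on UNIV (\<lambda>t. I g (max 0 t))"
    proof (rule lipschitz_onI)
      fix x y :: real
      have "dist (I g (max 0 x)) (I g (max 0 y)) \<le> M * \<bar>max 0 x - max 0 y\<bar>"
        unfolding dist_norm by (rule Ilip) auto
      also have "\<dots> \<le> M * dist x y" using M0 by (intro mult_left_mono) (auto simp: dist_real_def)
      finally show "dist (I g (max 0 x)) (I g (max 0 y)) \<le> M * dist x y" .
    qed (rule M0)
    then have "continuous_on UNIV (\<lambda>t. I g (max 0 t))" by (rule lipschitz_on_continuous_on)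
    then show "continuous_on UNIV (ff g)" unfolding ff_def by (auto intro!: continuous_intros)
    fix t :: real
    define t' where "t' = max 0 t"
    have t': "t' \<ge> 0" unfolding t'_def by simp
    have "norm (ff g t) = exp (-2*L*t') * norm (w0 + I g t')" unfolding ff_def t'_def by simp
    also have "\<dots> \<le> exp (-2*L*t') * (norm w0 + M * t')"
      using Ilip[of t' 0 g] t' I0 by (intro mult_left_mono) (auto intro: norm_triangle_le)
    also have "\<dots> = exp (-2*L*t') * norm w0 + exp (-2*L*t') * (M * t')" by (simp add: algebra_simps)
    also have "\<dots> \<le> 1 * norm w0 + M / (2*L)"
      using exp_lin_bound[OF L t' M0] L t' by (intro add_mono mult_right_mono) auto
    finally show "norm (ff g t) \<le> norm w0 + M / (2*L)" by simp
  qed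
  define \<Phi> where "\<Phi> g = Bcontfun (ff g)" for g
  have \<Phi>app: "apply_bcontfun (\<Phi> g) = ff g" for g unfolding \<Phi>_def using ffb by (simp add: Bcontfun_inverse)
  have contr: "dist (\<Phi> g1) (\<Phi> g2) \<le> 1/2 * dist g1 g2" for g1 g2
  proof (rule dist_bound)
    fix t :: real
    define D where "D = dist g1 g2"
    define t' where "t' = max 0 t"
    have t': "t' \<ge> 0" unfolding t'_def by simp
    have D0: "D \<ge> 0" unfolding D_def by simp
    have diff: "I g1 t' - I g2 t' = integral {0..t'} (\<lambda>s. h g1 s - h g2 s)"
      unfolding I_def using hint by (simp add: integral_diff)
    have pb: "norm (h g1 s - h g2 s) \<le> L * D * exp (2*L* s)" if "s \<in> {0..t'}" for s
    proof -
      have "norm (h g1 s - h g2 s) \<le> L * norm (exp (2*L* s) *\<^sub>R apply_bcontfun g1 s - exp (2*L* s) *\<^sub>R apply_bcontfun g2 s)"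
        unfolding h_def using lip that by auto
      also have "\<dots> = L * (exp (2*L* s) * dist (apply_bcontfun g1 s) (apply_bcontfun g2 s))"
        by (simp add: dist_norm scaleR_diff_right[symmetric])
      also have "\<dots> \<le> L * (exp (2*L* s) * D)"
        unfolding D_def using L by (intro mult_left_mono dist_bounded) auto
      finally show ?thesis by (simp add: algebra_simps)
    qed
    have ftc: "((\<lambda>s. L * D * exp (2*L* s)) has_integral (D/2 * exp (2*L*t') - D/2 * exp (2*L*0))) {0..t'}"
    proof (rule fundamental_theorem_of_calculus)
      show "0 \<le> t'" by (rule t')
      fix x assume "x \<in> {0..t'}"
      show "((\<lambda>s. D/2 * exp (2*L* s)) has_vector_derivative L * D * exp (2*L*x)) (at x within {0..t'})"
        unfolding has_real_derivative_iff_has_vector_derivative[symmetric]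
        by (auto intro!: derivative_eq_intros)
    qed
    have "norm (integral {0..t'} (\<lambda>s. h g1 s - h g2 s)) \<le> integral {0..t'} (\<lambda>s. L * D * exp (2*L* s))"
      using pb hint ftc by (intro integral_norm_bound_integral) (auto intro: integrable_diff)
    also have "\<dots> = D/2 * exp (2*L*t') - D/2" using integral_unique[OF ftc] by simp
    finally have nb: "norm (I g1 t' - I g2 t') \<le> D/2 * exp (2*L*t') - D/2" unfolding diff .
    have "dist (apply_bcontfun (\<Phi> g1) t) (apply_bcontfun (\<Phi> g2) t) = exp (-2*L*t') * norm (I g1 t' - I g2 t')"
      unfolding \<Phi>app ff_def t'_def[symmetric] dist_norm
      by (simp add: scaleR_diff_right[symmetric])
    also have "\<dots> \<le> exp (-2*L*t') * (D/2 * exp (2*L*t') - D/2)"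
      using nb by (intro mult_left_mono) auto
    also have "\<dots> = D/2 - D/2 * exp (-2*L*t')"
      by (simp add: algebra_simps mult_exp_exp)
    also have "\<dots> \<le> 1/2 * D" using D0 by simp
    finally show "dist (apply_bcontfun (\<Phi> g1) t) (apply_bcontfun (\<Phi> g2) t) \<le> 1/2 * dist g1 g2"
      unfolding D_def .
  qed
  obtain g where g: "\<Phi> g = g" using banach_fix_type[of "1/2" \<Phi>] contr by auto
  define w where "w t = w0 + I g t" for t
  have wg: "exp (2*L* s) *\<^sub>R apply_bcontfun g s = w s" if "s \<ge> 0" for s
  proof -
    have "apply_bcontfun g s = ff g s" using \<Phi>app[of g] g by simp
    then show ?thesis unfolding ff_def w_def using that by (simp add: mult_exp_exp)
  qed
  have "w 0 = w0" unfolding w_def I0 by simp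
  moreover have "(w has_vector_derivative F t (w t)) (at t within {0..T})" if "t \<in> {0..T}" for T t
  proof -
    have "((\<lambda>u. integral {0..u} (h g)) has_vector_derivative h g t) (at t within {0..T})"
      by (rule integral_has_vector_derivative[OF hcont that])
    then have "(w has_vector_derivative h g t) (at t within {0..T})"
      unfolding w_def I_def by (auto intro!: derivative_eq_intros)
    moreover have "h g t = F t (w t)" unfolding h_def using wg that by auto
    ultimately show ?thesis by simp
  qed
  ultimately show ?thesis by blast
qed



lemma norm_sq_deriv:
  fixes w :: "real \<Rightarrow> pt"
  assumes "(w has_vector_derivative W) (at t within S)"
  shows "((\<lambda>t. (norm (w t - ws))^2) has_real_derivative 2 * ((w t - ws) \<bullet> W)) (at t within S)"
proof -
  have d1: "((\<lambda>t. w t - ws) has_derivative (\<lambda>h. h *\<^sub>R W)) (at t within S)"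
    using assms unfolding has_vector_derivative_def by (auto intro!: derivative_eq_intros)
  have "((\<lambda>t. (w t - ws) \<bullet> (w t - ws)) has_derivative
          (\<lambda>h. (w t - ws) \<bullet> (h *\<^sub>R W) + (h *\<^sub>R W) \<bullet> (w t - ws))) (at t within S)"
    by (rule has_derivative_inner[OF d1 d1])
  then have "((\<lambda>t. (w t - ws) \<bullet> (w t - ws)) has_derivative (\<lambda>h. (2 * ((w t - ws) \<bullet> W)) * h)) (at t within S)"
    by (rule has_derivative_eq_rhs) (auto simp: inner_commute algebra_simps)
  then show ?thesis unfolding has_field_derivative_def power2_norm_eq_inner by simp
qed

lemma est:
  fixes w W :: "real \<Rightarrow> pt" and H :: "pt \<Rightarrow> pt" and ws :: pt
  assumes T: "T \<ge> 0" and c: "c > 0" and K: "K \<ge> 0" and P: "P \<ge> 0" and c0: "c0 > 0" and r0: "r0 > 0"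
    and \<epsilon>: "\<epsilon> \<ge> 0" and \<rho>: "\<rho> > 0" "\<rho> \<le> c / (2*K+2)"
    and der: "\<forall>t\<in>{0..T}. (w has_vector_derivative W t) (at t within {0..T})"
    and field: "\<forall>t\<in>{0..T}. norm (w t - ws) \<le> \<rho> \<longrightarrow> norm (W t - H (w t - ws)) \<le> P * c0 * \<epsilon> * exp (- r0 * t)"
    and neg: "\<forall>e. norm e \<le> \<rho> \<longrightarrow> e \<bullet> H e \<le> - c * (norm e)^2 + K * (norm e)^3"
    and init: "norm (w 0 - ws) \<le> \<epsilon>"
    and small: "(1 + 2*P^2*c0^2/(c*r0)) * \<epsilon>^2 < \<rho>^2"
  shows "\<forall>t\<in>{0..T}. (norm (w t - ws))^2 \<le> (1 + 2*P^2*c0^2/(c*r0)) * \<epsilon>^2 * exp (- (min (c/2) (2*r0) / 2) * t)"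
proof -
  define V where "V t = (norm (w t - ws))^2" for t
  define V' where "V' t = 2 * ((w t - ws) \<bullet> W t)" for t
  define B where "B = 2*P^2*c0^2*\<epsilon>^2/c"
  have B: "B \<ge> 0" unfolding B_def using c by simp
  have der': "\<forall>t\<in>{0..T}. (V has_real_derivative V' t) (at t within {0..T})"
    unfolding V_def V'_def using der norm_sq_deriv by blast
  have ineq: "\<forall>t\<in>{0..T}. V t \<le> \<rho>^2 \<longrightarrow> V' t \<le> - (c/2) * V t + B * exp (- (2*r0) * t)"
  proof (intro ballI impI)
    fix t assume t: "t \<in> {0..T}" and Vt: "V t \<le> \<rho>^2"
    define e where "e = w t - ws"
    define p where "p = P * c0 * \<epsilon> * exp (- r0 * t)"
    have p: "p \<ge> 0" unfolding p_def using P c0 \<epsilon> by simp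
    have ne: "norm e \<le> \<rho>" using Vt \<rho> unfolding V_def e_def by (simp add: power2_le_iff_abs_le)
    have f: "norm (W t - H e) \<le> p" using field t ne unfolding e_def p_def by auto
    have n: "e \<bullet> H e \<le> - c * (norm e)^2 + K * (norm e)^3" using neg ne by auto
    have K3: "K * (norm e)^3 \<le> c/2 * (norm e)^2"
    proof -
      have "K * norm e \<le> K * \<rho>" using ne K by (intro mult_left_mono) auto
      also have "\<dots> \<le> K * (c / (2*K+2))" using \<rho> K by (intro mult_left_mono) auto
      also have "\<dots> \<le> c/2" using K c by (simp add: field_simps)
      finally have "K * norm e * (norm e)^2 \<le> c/2 * (norm e)^2" by (intro mult_right_mono) auto
      then show ?thesis by (simp add: power3_eq_cube power2_eq_square algebra_simps)
    qed
    have "e \<bullet> W t = e \<bullet> H e + e \<bullet> (W t - H e)" by (simp add: inner_diff_right)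
    also have "\<dots> \<le> e \<bullet> H e + norm e * p"
      using Cauchy_Schwarz_ineq2[of e "W t - H e"] f mult_left_mono[OF f norm_ge_zero[of e]] by linarith
    finally have "e \<bullet> W t \<le> - c/2 * (norm e)^2 + norm e * p" using n K3 by linarith
    moreover have "norm e * p \<le> c/4 * (norm e)^2 + p^2 / c"
    proof -
      have "0 \<le> (c * norm e - 2*p)^2 / (4*c)" using c by simp
      also have "\<dots> = c/4 * (norm e)^2 + p^2 / c - norm e * p"
        using c by (simp add: field_simps power2_eq_square)
      finally show ?thesis by simp
    qed
    ultimately have "e \<bullet> W t \<le> - c/4 * (norm e)^2 + p^2 / c" by linarith
    moreover have "p^2 = P^2*c0^2*\<epsilon>^2 * exp (- (2*r0) * t)"
      unfolding p_def by (simp add: power_mult_distrib power2_eq_square mult_exp_exp algebra_simps)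
    ultimately show "V' t \<le> - (c/2) * V t + B * exp (- (2*r0) * t)"
      unfolding V'_def V_def B_def e_def[symmetric] by (simp add: field_simps)
  qed
  define \<gamma> where "\<gamma> = min (c/2) (2*r0) / 2"
  have bnd: "B / (2*r0 - \<gamma>) \<le> 2*P^2*c0^2/(c*r0) * \<epsilon>^2"
  proof -
    have "r0 \<le> 2*r0 - \<gamma>" unfolding \<gamma>_def by auto
    then have "B / (2*r0 - \<gamma>) \<le> B / r0" using B r0 by (intro divide_left_mono) auto
    also have "\<dots> = 2*P^2*c0^2/(c*r0) * \<epsilon>^2" unfolding B_def by simp
    finally show ?thesis .
  qed
  have V0: "V 0 \<le> \<epsilon>^2" unfolding V_def using init by (simp add: power_mono)
  have initc: "V 0 + B / (2*r0 - min (c/2) (2*r0) / 2) < \<rho>^2"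
    using bnd V0 small unfolding \<gamma>_def by (simp add: algebra_simps)
  have res: "\<forall>t\<in>{0..T}. V t \<le> (V 0 + B / (2*r0 - min (c/2) (2*r0) / 2)) * exp (- (min (c/2) (2*r0) / 2) * t)"
    by (rule comparison[OF T _ _ B _ der' ineq initc]) (use c r0 V_def in auto)
  show ?thesis
  proof
    fix t assume t: "t \<in> {0..T}"
    have "V t \<le> (V 0 + B / (2*r0 - \<gamma>)) * exp (- \<gamma> * t)" using res t unfolding \<gamma>_def by auto
    also have "\<dots> \<le> (1 + 2*P^2*c0^2/(c*r0)) * \<epsilon>^2 * exp (- \<gamma> * t)"
      using bnd V0 by (intro mult_right_mono) (auto simp: algebra_simps)
    finally show "(norm (w t - ws))^2 \<le> (1 + 2*P^2*c0^2/(c*r0)) * \<epsilon>^2 * exp (- (min (c/2) (2*r0) / 2) * t)"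
      unfolding V_def \<gamma>_def .
  qed
qed



context mrg begin

abbreviation "uu \<equiv> ps 1 - q"
abbreviation "vv \<equiv> ps 2 - q"

lemma det_uv: "det2 uu vv \<noteq> 0"
  using noncol_det[OF noncol] .

lemma uu_nz: "uu \<noteq> 0" using det_uv unfolding det2_def by auto
lemma vv_nz: "vv \<noteq> 0" using det_uv unfolding det2_def by auto

lemma neg_combined:
  "\<exists>c>0. \<exists>K\<ge>0. \<forall>e. norm e \<le> min (norm uu) (norm vv) / 2 \<longrightarrow>
     e \<bullet> (edge_term d kl (uu - e) uu + edge_term d kl1 (vv - e) vv) \<le> - c * (norm e)^2 + K * (norm e)^3"
proof -
  obtain \<alpha>1 K1 where a1: "\<alpha>1 > 0" "K1 \<ge> 0"
    "\<forall>e. norm e \<le> norm uu / 2 \<longrightarrow> e \<bullet> edge_term d kl (uu - e) uu \<le> - \<alpha>1 * Qb d uu e + K1 * norm e ^ 3"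
    using edge_neg[OF uu_nz kl_pos, of d] by blast
  obtain \<alpha>2 K2 where a2: "\<alpha>2 > 0" "K2 \<ge> 0"
    "\<forall>e. norm e \<le> norm vv / 2 \<longrightarrow> e \<bullet> edge_term d kl1 (vv - e) vv \<le> - \<alpha>2 * Qb d vv e + K2 * norm e ^ 3"
    using edge_neg[OF vv_nz kl1_pos, of d] by blast
  define N where "N = (norm uu)^2 + (norm vv)^2"
  have N: "N > 0" unfolding N_def using uu_nz by (simp add: add_pos_nonneg)
  define c where "c = min \<alpha>1 \<alpha>2 * (det2 uu vv)^2 / N"
  have c: "c > 0" unfolding c_def using a1 a2 N det_uv by simp
  have Q: "Qb d uu e + Qb d vv e \<ge> (det2 uu vv)^2 * (norm e)^2 / N" for e
  proof -
    have "(det2 uu vv)^2 * (norm e)^2 \<le> (Qb d uu e + Qb d vv e) * N"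
      unfolding N_def Qb_def using det_ineq[of uu vv e] det_ineq2[of uu vv e] by auto
    then show ?thesis using N by (simp add: field_simps)
  qed
  have Qnn: "Qb d z e \<ge> 0" for z e unfolding Qb_def by auto
  have main: "\<exists>K\<ge>0. \<forall>e. norm e \<le> min (norm uu) (norm vv) / 2 \<longrightarrow>
      e \<bullet> (edge_term d kl (uu - e) uu + edge_term d kl1 (vv - e) vv) \<le> - c * (norm e)^2 + K * (norm e)^3"
  proof -
    show "\<exists>K\<ge>0. \<forall>e. norm e \<le> min (norm uu) (norm vv) / 2 \<longrightarrow>
      e \<bullet> (edge_term d kl (uu - e) uu + edge_term d kl1 (vv - e) vv) \<le> - c * (norm e)^2 + K * (norm e)^3"
    proof (intro exI[of _ "K1 + K2"] conjI allI impI)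
      show "K1 + K2 \<ge> 0" using a1 a2 by simp
      fix e :: pt assume e: "norm e \<le> min (norm uu) (norm vv) / 2"
      have "e \<bullet> (edge_term d kl (uu - e) uu + edge_term d kl1 (vv - e) vv)
          \<le> - \<alpha>1 * Qb d uu e + K1 * norm e ^ 3 + (- \<alpha>2 * Qb d vv e + K2 * norm e ^ 3)"
        unfolding inner_add_right using a1(3) a2(3) e by (intro add_mono) auto
      also have "\<dots> \<le> - min \<alpha>1 \<alpha>2 * (Qb d uu e + Qb d vv e) + (K1 + K2) * (norm e)^3"
      proof -
        have "min \<alpha>1 \<alpha>2 * Qb d uu e \<le> \<alpha>1 * Qb d uu e" using Qnn by (intro mult_right_mono) auto
        moreover have "min \<alpha>1 \<alpha>2 * Qb d vv e \<le> \<alpha>2 * Qb d vv e" using Qnn by (intro mult_right_mono) auto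
        ultimately show ?thesis by (simp add: algebra_simps)
      qed
      also have "\<dots> \<le> - c * (norm e)^2 + (K1 + K2) * (norm e)^3"
      proof -
        have "min \<alpha>1 \<alpha>2 * ((det2 uu vv)^2 * (norm e)^2 / N) \<le> min \<alpha>1 \<alpha>2 * (Qb d uu e + Qb d vv e)"
          using Q a1 a2 by (intro mult_left_mono) auto
        moreover have "min \<alpha>1 \<alpha>2 * ((det2 uu vv)^2 * (norm e)^2 / N) = c * (norm e)^2"
          unfolding c_def by simp
        ultimately show ?thesis by simp
      qed
      finally show "e \<bullet> (edge_term d kl (uu - e) uu + edge_term d kl1 (vv - e) vv) \<le> - c * (norm e)^2 + (K1 + K2) * (norm e)^3" .
    qed
  qed
  show ?thesis using main c by blast
qed

definition JJ where "JJ = {j\<in>{1..n}. (1, j) \<in> E}"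

lemma JJ_sub: "JJ \<subseteq> {2..n}"
  unfolding JJ_def using E_mem by fastforce

lemma JJ_fin: "finite JJ" unfolding JJ_def by simp

lemma U1_eq: "U1 \<zeta> = (\<Sum>j\<in>JJ. edge_term (isd 1) (k (1, j)) (\<zeta> j) (ps j - ps 1))"
proof -
  have "U1 \<zeta> = (\<Sum>j\<in>{1..n}. if (1, j) \<in> E then edge_term (isd 1) (k (1, j)) (\<zeta> j) (ps j - ps 1) else 0)"
    unfolding U1_def control_def by (intro sum.cong refl) (auto simp: conf_of_def dest: E_mem)
  also have "\<dots> = (\<Sum>j\<in>JJ. edge_term (isd 1) (k (1, j)) (\<zeta> j) (ps j - ps 1))"
    unfolding JJ_def by (rule sum.inter_filter[symmetric]) simp
  finally show ?thesis .
qed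

lemma U1_local: "(\<forall>j\<in>{2..n}. \<zeta> j = \<zeta>' j) \<Longrightarrow> U1 \<zeta> = U1 \<zeta>'"
  unfolding U1_eq using JJ_sub by (intro sum.cong) auto

lemma zj_nz: "j \<in> {2..n} \<Longrightarrow> ps j - ps 1 \<noteq> 0"
  using ps_distinct n2 unfolding inj_on_def by fastforce

lemma U1_consts:
  "\<exists>LU\<ge>0. \<exists>\<rho>U>0.
     (\<forall>\<zeta>. rel_norm n (\<lambda>j. \<zeta> j - rel_star ps j) \<le> \<rho>U \<longrightarrow> norm (U1 \<zeta>) \<le> LU * rel_norm n (\<lambda>j. \<zeta> j - rel_star ps j)) \<and>
     (\<forall>S x. (\<forall>j\<in>{2..n}. continuous_on S (\<lambda>s. x s j)) \<longrightarrow> (\<forall>s\<in>S. rel_norm n (\<lambda>j. x s j - rel_star ps j) \<le> \<rho>U)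
            \<longrightarrow> continuous_on S (\<lambda>s. U1 (x s)))"
proof -
  define g where "g j z = edge_term (isd 1) (k (1, j)) z (ps j - ps 1)" for j z
  have "\<forall>j\<in>JJ. \<exists>L. L-lipschitz_on (cball (ps j - ps 1) (norm (ps j - ps 1) / 2)) (g j)"
  proof
    fix j assume j: "j \<in> JJ"
    have "k (1, j) > 0" using j k_pos unfolding JJ_def by auto
    then show "\<exists>L. L-lipschitz_on (cball (ps j - ps 1) (norm (ps j - ps 1) / 2)) (g j)"
      unfolding g_def using edge_lip zj_nz j JJ_sub by blast
  qed
  then obtain Lf where Lf: "\<forall>j\<in>JJ. (Lf j)-lipschitz_on (cball (ps j - ps 1) (norm (ps j - ps 1) / 2)) (g j)"
    by metis
  define LU where "LU = (\<Sum>j\<in>JJ. Lf j)"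
  define \<rho>U where "\<rho>U = Min ((\<lambda>j. norm (ps j - ps 1) / 2) ` {2..n})"
  have LU: "LU \<ge> 0" unfolding LU_def using Lf by (intro sum_nonneg) (meson lipschitz_on_nonneg)
  have \<rho>U: "\<rho>U > 0" unfolding \<rho>U_def using n2 zj_nz by (subst Min_gr_iff) auto
  have \<rho>Ule: "\<rho>U \<le> norm (ps j - ps 1) / 2" if "j \<in> {2..n}" for j
    unfolding \<rho>U_def using that by (intro Min_le) auto
  have inball: "\<zeta> j \<in> cball (ps j - ps 1) (norm (ps j - ps 1) / 2)"
    if "rel_norm n (\<lambda>j. \<zeta> j - rel_star ps j) \<le> \<rho>U" "j \<in> JJ" for \<zeta> j
  proof -
    have j: "j \<in> {2..n}" using that JJ_sub by auto
    have "norm (\<zeta> j - rel_star ps j) \<le> rel_norm n (\<lambda>j. \<zeta> j - rel_star ps j)"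
      using rel_norm_comp[OF j, of "\<lambda>j. \<zeta> j - rel_star ps j"] by simp
    then show ?thesis using that(1) \<rho>Ule[OF j] by (simp add: dist_norm rel_star_def norm_minus_commute)
  qed
  have bound: "norm (U1 \<zeta>) \<le> LU * rel_norm n (\<lambda>j. \<zeta> j - rel_star ps j)"
    if h: "rel_norm n (\<lambda>j. \<zeta> j - rel_star ps j) \<le> \<rho>U" for \<zeta>
  proof -
    have "norm (U1 \<zeta>) \<le> (\<Sum>j\<in>JJ. norm (g j (\<zeta> j)))"
      unfolding U1_eq g_def by (rule norm_sum)
    also have "\<dots> \<le> (\<Sum>j\<in>JJ. Lf j * rel_norm n (\<lambda>j. \<zeta> j - rel_star ps j))"
    proof (rule sum_mono)
      fix j assume j: "j \<in> JJ"
      have j2: "j \<in> {2..n}" using j JJ_sub by auto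
      have c: "ps j - ps 1 \<in> cball (ps j - ps 1) (norm (ps j - ps 1) / 2)" by simp
      have z: "g j (ps j - ps 1) = 0" unfolding g_def using zj_nz[OF j2] by (rule edge_zero)
      have "norm (g j (\<zeta> j)) = norm (g j (\<zeta> j) - g j (ps j - ps 1))" using z by simp
      also have "\<dots> \<le> Lf j * norm (\<zeta> j - (ps j - ps 1))"
        using lipschitz_on_normD[OF Lf[rule_format, OF j] inball[OF h j] c] .
      also have "\<dots> \<le> Lf j * rel_norm n (\<lambda>j. \<zeta> j - rel_star ps j)"
        using rel_norm_comp[OF j2, of "\<lambda>j. \<zeta> j - rel_star ps j"] Lf j
        by (intro mult_left_mono) (auto simp: rel_star_def intro: lipschitz_on_nonneg)
      finally show "norm (g j (\<zeta> j)) \<le> Lf j * rel_norm n (\<lambda>j. \<zeta> j - rel_star ps j)" .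
    qed
    also have "\<dots> = LU * rel_norm n (\<lambda>j. \<zeta> j - rel_star ps j)"
      unfolding LU_def by (simp add: sum_distrib_right)
    finally show ?thesis .
  qed
  have cont: "continuous_on S (\<lambda>s. U1 (x s))"
    if c: "\<forall>j\<in>{2..n}. continuous_on S (\<lambda>s. x s j)" and b: "\<forall>s\<in>S. rel_norm n (\<lambda>j. x s j - rel_star ps j) \<le> \<rho>U"
    for S x
  proof -
    have "continuous_on S (\<lambda>s. \<Sum>j\<in>JJ. g j (x s j))"
    proof (intro continuous_on_sum)
      fix j assume j: "j \<in> JJ"
      show "continuous_on S (\<lambda>s. g j (x s j))"
      proof (rule continuous_on_compose2[of "cball (ps j - ps 1) (norm (ps j - ps 1) / 2)" "g j"])
        show "continuous_on (cball (ps j - ps 1) (norm (ps j - ps 1) / 2)) (g j)"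
          using Lf j by (blast intro: lipschitz_on_continuous_on)
        show "continuous_on S (\<lambda>s. x s j)" using c j JJ_sub by auto
        show "(\<lambda>s. x s j) ` S \<subseteq> cball (ps j - ps 1) (norm (ps j - ps 1) / 2)"
          using inball b j by auto
      qed
    qed
    then show ?thesis unfolding U1_eq g_def .
  qed
  show ?thesis using LU \<rho>U bound cont by blast
qed

lemma rel_field_local:
  assumes "\<forall>i\<in>{2..n}. \<zeta> i = \<zeta>' i" "j \<in> {2..n}"
  shows "rel_field n E isd k ps \<zeta> j = rel_field n E isd k ps \<zeta>' j"
proof -
  have c: "conf_of \<zeta> i = conf_of \<zeta>' i" if "i \<in> {1..n}" for i
    using assms(1) that by (cases "i = 1") (auto simp: conf_of_def)
  have "control n E isd k ps (conf_of \<zeta>) i = control n E isd k ps (conf_of \<zeta>') i" if "i \<in> {1..n}" for i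
    unfolding control_def using c that by (intro sum.cong) auto
  then show ?thesis unfolding rel_field_def using assms(2) by auto
qed

lemma is_solution_local:
  assumes "\<forall>s. \<forall>i\<in>{2..n}. x s i = x' s i"
  shows "is_solution n E isd k ps x T = is_solution n E isd k ps x' T"
proof -
  have f: "(\<lambda>s. x s j) = (\<lambda>s. x' s j)" if "j \<in> {2..n}" for j using assms that by auto
  have r: "rel_field n E isd k ps (x t) j = rel_field n E isd k ps (x' t) j" if "j \<in> {2..n}" for t j
    using rel_field_local[of "x t" "x' t" j] assms that by auto
  show ?thesis unfolding is_solution_def using f r by auto
qed

end


definition clampv :: "pt \<Rightarrow> real \<Rightarrow> pt \<Rightarrow> pt" where
  "clampv ws \<rho> y = (\<chi> i. max (ws$i - \<rho>) (min (ws$i + \<rho>) (y$i)))"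

lemma clamp1: "a \<le> b \<Longrightarrow> \<bar>max a (min b x) - max a (min b y)\<bar> \<le> \<bar>x - y\<bar>" for a b x y :: real
  by (auto simp: max_def min_def)

lemma clamp_lip:
  assumes "\<rho> \<ge> 0"
  shows "norm (clampv ws \<rho> y - clampv ws \<rho> y') \<le> norm (y - y')"
proof -
  have c: "((clampv ws \<rho> y - clampv ws \<rho> y')$i)^2 \<le> ((y - y')$i)^2" for i
  proof -
    have "\<bar>(clampv ws \<rho> y - clampv ws \<rho> y')$i\<bar> \<le> \<bar>(y - y')$i\<bar>"
      unfolding clampv_def using clamp1[of "ws$i - \<rho>" "ws$i + \<rho>"] assms by simp
    then show ?thesis by (simp add: abs_le_square_iff)
  qed
  have "(norm (clampv ws \<rho> y - clampv ws \<rho> y'))^2 \<le> (norm (y - y'))^2"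
    unfolding normsq2 using c[of 1] c[of 2] by linarith
  then show ?thesis by (rule power2_le_imp_le) simp
qed

lemma clamp_bound:
  assumes "\<rho> \<ge> 0"
  shows "norm (clampv ws \<rho> y - ws) \<le> 2 * \<rho>"
proof -
  have c: "((clampv ws \<rho> y - ws)$i)^2 \<le> \<rho>^2" for i
  proof -
    have "\<bar>(clampv ws \<rho> y - ws)$i\<bar> \<le> \<bar>\<rho>\<bar>" unfolding clampv_def using assms by (auto simp: max_def min_def)
    then show ?thesis by (simp only: abs_le_square_iff)
  qed
  have "(norm (clampv ws \<rho> y - ws))^2 \<le> (2*\<rho>)^2"
  proof -
    have "(2*\<rho>)^2 = 4 * \<rho>^2" by (simp add: power2_eq_square)
    then show ?thesis unfolding normsq2 using c[of 1] c[of 2] zero_le_power2[of \<rho>] by linarith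
  qed
  then show ?thesis by (rule power2_le_imp_le) (use assms in simp)
qed

lemma clamp_id:
  assumes "norm (y - ws) \<le> \<rho>"
  shows "clampv ws \<rho> y = y"
proof -
  have h: "\<bar>(y - ws)$i\<bar> \<le> \<rho>" for i using component_le_norm_cart[of "y - ws" i] assms by linarith
  show ?thesis unfolding clampv_def vec_eq_iff
  proof
    fix i
    show "(\<chi> i. max (ws$i - \<rho>) (min (ws$i + \<rho>) (y$i)))$i = y$i"
      using h[of i] by (auto simp: max_def min_def abs_le_iff)
  qed
qed

lemma clamp_cont: "\<rho> \<ge> 0 \<Longrightarrow> continuous_on UNIV (clampv ws \<rho>)"
  by (rule lipschitz_on_continuous_on[of 1]) (auto intro!: lipschitz_onI simp: dist_norm clamp_lip)



context mrg begin

lemma main: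
  assumes stable: "loc_exp_stable n E isd k ps"
  shows "loc_exp_stable m E' isd' k' ps'"
proof -
  obtain \<delta>0 c0 r0 where \<delta>0: "\<delta>0 > 0" and c0: "c0 > 0" and r0: "r0 > 0"
    and H0: "\<forall>x0. rel_norm n (\<lambda>j. x0 j - rel_star ps j) < \<delta>0 \<longrightarrow>
          (\<exists>x. (\<forall>j\<in>{2..n}. x 0 j = x0 j) \<and> (\<forall>T\<ge>0. is_solution n E isd k ps x T)) \<and>
          (\<forall>x T. T \<ge> 0 \<longrightarrow> is_solution n E isd k ps x T \<longrightarrow> (\<forall>j\<in>{2..n}. x 0 j = x0 j) \<longrightarrow>
             (\<forall>t\<in>{0..T}. rel_norm n (\<lambda>j. x t j - rel_star ps j)
                \<le> c0 * rel_norm n (\<lambda>j. x0 j - rel_star ps j) * exp (- r0 * t)))"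
    using stable unfolding loc_exp_stable_def by blast
  obtain c K where c: "c > 0" and K: "K \<ge> 0" and negc: "\<forall>e. norm e \<le> min (norm uu) (norm vv) / 2 \<longrightarrow>
     e \<bullet> (edge_term d kl (uu - e) uu + edge_term d kl1 (vv - e) vv) \<le> - c * (norm e)^2 + K * (norm e)^3"
    using neg_combined by blast
  obtain LU \<rho>U where LU: "LU \<ge> 0" and \<rho>U: "\<rho>U > 0"
    and U1b: "\<forall>\<zeta>. rel_norm n (\<lambda>j. \<zeta> j - rel_star ps j) \<le> \<rho>U \<longrightarrow> norm (U1 \<zeta>) \<le> LU * rel_norm n (\<lambda>j. \<zeta> j - rel_star ps j)"
    and U1c: "\<forall>(S::real set) (x::real \<Rightarrow> nat \<Rightarrow> pt). (\<forall>j\<in>{2..n}. continuous_on S (\<lambda>s. x s j)) \<longrightarrow> (\<forall>s\<in>S. rel_norm n (\<lambda>j. x s j - rel_star ps j) \<le> \<rho>U)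
            \<longrightarrow> continuous_on S (\<lambda>s. U1 (x s))"
    using U1_consts by blast
  define g1 where "g1 z = edge_term d kl z uu" for z
  define g2 where "g2 z = edge_term d kl1 z vv" for z
  obtain L1 where L1: "L1-lipschitz_on (cball uu (norm uu / 2)) g1"
    unfolding g1_def using edge_lip[OF uu_nz kl_pos] by blast
  obtain L2 where L2: "L2-lipschitz_on (cball vv (norm vv / 2)) g2"
    unfolding g2_def using edge_lip[OF vv_nz kl1_pos] by blast
  have L1n: "L1 \<ge> 0" using L1 lipschitz_on_nonneg by blast
  have L2n: "L2 \<ge> 0" using L2 lipschitz_on_nonneg by blast
  have g1z: "g1 uu = 0" unfolding g1_def using uu_nz by (rule edge_zero)
  have g2z: "g2 vv = 0" unfolding g2_def using vv_nz by (rule edge_zero)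
  define ws where "ws = q - ps 1"
  have wsu: "ws = - uu" unfolding ws_def by simp
  define Hf where "Hf e = g1 (uu - e) + g2 (vv - e)" for e
  define \<rho> where "\<rho> = min (min (norm uu) (norm vv) / 8) (c / (2*K+2))"
  define \<rho>1 where "\<rho>1 = min \<rho>U (norm vv / 4)"
  define P where "P = L2 + LU"
  define C1 where "C1 = 1 + 2*P^2*c0^2/(c*r0)"
  define \<gamma> where "\<gamma> = min (c/2) (2*r0) / 2"
  define \<delta> where "\<delta> = min \<delta>0 (min (\<rho>1/c0) (\<rho> / sqrt C1))"
  define rr where "rr = min r0 (\<gamma>/2)"
  define cc where "cc = c0 + sqrt C1"
  have nu: "norm uu > 0" using uu_nz by simp
  have nv: "norm vv > 0" using vv_nz by simp
  have \<rho>a: "\<rho> \<le> min (norm uu) (norm vv) / 8" unfolding \<rho>_def by (rule min.cobounded1)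
  have \<rho>: "\<rho> > 0" "\<rho> \<le> c / (2*K+2)" "\<rho> \<le> norm uu / 8" "\<rho> \<le> norm vv / 8"
    using \<rho>a unfolding \<rho>_def using nu nv c K by (auto simp: min_def)
  have \<rho>1: "\<rho>1 > 0" "\<rho>1 \<le> \<rho>U" "\<rho>1 \<le> norm vv / 4" unfolding \<rho>1_def using \<rho>U nv by auto
  have P: "P \<ge> 0" unfolding P_def using L2n LU by simp
  have C1: "C1 \<ge> 1" unfolding C1_def using c r0 by simp
  have \<gamma>: "\<gamma> > 0" unfolding \<gamma>_def using c r0 by simp
  have \<delta>: "\<delta> > 0" unfolding \<delta>_def using \<delta>0 \<rho>1 c0 \<rho> C1 by simp
  have rr: "rr > 0" "rr \<le> r0" "rr \<le> \<gamma>/2" unfolding rr_def using r0 \<gamma> by auto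
  have cc: "cc > 0" unfolding cc_def using c0 C1 by (intro add_pos_nonneg) auto
  have neg': "\<forall>e. norm e \<le> \<rho> \<longrightarrow> e \<bullet> Hf e \<le> - c * (norm e)^2 + K * (norm e)^3"
    using negc \<rho> unfolding Hf_def g1_def g2_def by auto
  have rs: "rel_star ps' j = rel_star ps j" if "j \<in> {1..n}" for j
    using that unfolding rel_star_def by auto
  have rsm: "rel_star ps' m = ws" unfolding rel_star_def ws_def using n2 by simp
  have rnn: "rel_norm n (\<lambda>j. y j - rel_star ps' j) = rel_norm n (\<lambda>j. y j - rel_star ps j)" for y
    unfolding rel_norm_def using rs by (intro arg_cong[where f=sqrt] sum.cong) auto
  have fieldb: "norm (g1 (- w) + g2 (\<zeta> 2 - w) - U1 \<zeta> - Hf (w - ws)) \<le> P * rel_norm n (\<lambda>j. \<zeta> j - rel_star ps j)"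
    if h1: "rel_norm n (\<lambda>j. \<zeta> j - rel_star ps j) \<le> \<rho>1" and h2: "norm (w - ws) \<le> \<rho>" for \<zeta> w
  proof -
    define \<rho>n where "\<rho>n = rel_norm n (\<lambda>j. \<zeta> j - rel_star ps j)"
    define \<delta>2 where "\<delta>2 = \<zeta> 2 - rel_star ps 2"
    define e where "e = w - ws"
    have d2: "norm \<delta>2 \<le> \<rho>n" unfolding \<delta>2_def \<rho>n_def using rel_norm_comp[of 2 n "\<lambda>j. \<zeta> j - rel_star ps j"] n2 by simp
    have e1: "- w = uu - e" unfolding e_def wsu by simp
    have e2: "\<zeta> 2 - w = (vv - e) + \<delta>2" unfolding e_def \<delta>2_def ws_def rel_star_def by simp
    have eq: "g1 (- w) + g2 (\<zeta> 2 - w) - U1 \<zeta> - Hf (w - ws) = (g2 ((vv - e) + \<delta>2) - g2 (vv - e)) - U1 \<zeta>"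
      unfolding Hf_def e1 e2 e_def[symmetric] by simp
    have b1: "(vv - e) + \<delta>2 \<in> cball vv (norm vv / 2)"
    proof -
      have "norm (e - \<delta>2) \<le> norm e + norm \<delta>2" by (rule norm_triangle_ineq4)
      also have "\<dots> \<le> \<rho> + \<rho>1" using h2 d2 h1 unfolding e_def \<rho>n_def by linarith
      finally show ?thesis using \<rho> \<rho>1 by (simp add: dist_norm)
    qed
    have b2: "vv - e \<in> cball vv (norm vv / 2)" using h2 \<rho> unfolding e_def by (simp add: dist_norm)
    have "norm (g1 (- w) + g2 (\<zeta> 2 - w) - U1 \<zeta> - Hf (w - ws)) \<le> norm (g2 ((vv - e) + \<delta>2) - g2 (vv - e)) + norm (U1 \<zeta>)"
      unfolding eq by (rule norm_triangle_ineq4)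
    also have "\<dots> \<le> L2 * norm ((vv - e) + \<delta>2 - (vv - e)) + LU * \<rho>n"
      using lipschitz_on_normD[OF L2 b1 b2] U1b h1 \<rho>1 unfolding \<rho>n_def by (intro add_mono) auto
    also have "\<dots> \<le> L2 * \<rho>n + LU * \<rho>n" using d2 L2n by (simp add: mult_left_mono)
    finally show ?thesis unfolding P_def \<rho>n_def by (simp add: algebra_simps)
  qed
  have NEWF_eq: "NEWF \<zeta> = g1 (- \<zeta> m) + g2 (\<zeta> 2 - \<zeta> m) - U1 \<zeta>" for \<zeta>
    unfolding NEWF_def g1_def g2_def by simp
  have goal: "rel_norm m (\<lambda>j. x0 j - rel_star ps' j) < \<delta> \<longrightarrow>
          (\<exists>x. (\<forall>j\<in>{2..m}. x 0 j = x0 j) \<and> (\<forall>T\<ge>0. is_solution m E' isd' k' ps' x T)) \<and>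
          (\<forall>x T. T \<ge> 0 \<longrightarrow> is_solution m E' isd' k' ps' x T \<longrightarrow> (\<forall>j\<in>{2..m}. x 0 j = x0 j) \<longrightarrow>
             (\<forall>t\<in>{0..T}. rel_norm m (\<lambda>j. x t j - rel_star ps' j)
                \<le> cc * rel_norm m (\<lambda>j. x0 j - rel_star ps' j) * exp (- rr * t)))" for x0
  proof
    assume x0: "rel_norm m (\<lambda>j. x0 j - rel_star ps' j) < \<delta>"
    define \<epsilon>0 where "\<epsilon>0 = rel_norm m (\<lambda>j. x0 j - rel_star ps' j)"
    have \<epsilon>0: "\<epsilon>0 \<ge> 0" unfolding \<epsilon>0_def by (rule rel_norm_nonneg)
    have \<epsilon>0d: "\<epsilon>0 < \<delta>0" "\<epsilon>0 < \<rho>1/c0" "\<epsilon>0 < \<rho> / sqrt C1" using x0 unfolding \<epsilon>0_def \<delta>_def by auto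
    have c0e: "c0 * \<epsilon>0 \<le> \<rho>1" using \<epsilon>0d c0 by (simp add: field_simps)
    have small: "C1 * \<epsilon>0^2 < \<rho>^2"
    proof -
      have "sqrt C1 * \<epsilon>0 < \<rho>" using \<epsilon>0d C1 by (simp add: field_simps)
      then have "(sqrt C1 * \<epsilon>0)^2 < \<rho>^2" using \<epsilon>0 C1 by (intro power_strict_mono) auto
      then show ?thesis using C1 by (simp add: power_mult_distrib)
    qed
    define \<epsilon>' where "\<epsilon>' = rel_norm n (\<lambda>j. x0 j - rel_star ps j)"
    have \<epsilon>': "\<epsilon>' \<le> \<epsilon>0" unfolding \<epsilon>'_def \<epsilon>0_def using rel_norm_le_suc rnn by metis
    have \<epsilon>'d: "\<epsilon>' < \<delta>0" using \<epsilon>' \<epsilon>0d by simp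
    have Hex: "\<exists>x. (\<forall>j\<in>{2..n}. x 0 j = x0 j) \<and> (\<forall>T\<ge>0. is_solution n E isd k ps x T)"
      using H0 \<epsilon>'d unfolding \<epsilon>'_def by blast
    have Hall: "\<forall>x T. T \<ge> 0 \<longrightarrow> is_solution n E isd k ps x T \<longrightarrow> (\<forall>j\<in>{2..n}. x 0 j = x0 j) \<longrightarrow>
             (\<forall>t\<in>{0..T}. rel_norm n (\<lambda>j. x t j - rel_star ps j) \<le> c0 * \<epsilon>' * exp (- r0 * t))"
      using H0 \<epsilon>'d unfolding \<epsilon>'_def by blast
    have init: "norm (x0 m - ws) \<le> \<epsilon>0"
      using rel_norm_new_le[of "\<lambda>j. x0 j - rel_star ps' j"] unfolding \<epsilon>0_def rsm .
    have ob: "rel_norm n (\<lambda>j. x t j - rel_star ps j) \<le> c0 * \<epsilon>0 * exp (- r0 * t)"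
      if "T \<ge> 0" "is_solution n E isd k ps x T" "\<forall>j\<in>{2..n}. x 0 j = x0 j" "t \<in> {0..T}" for x T t
    proof -
      have "rel_norm n (\<lambda>j. x t j - rel_star ps j) \<le> c0 * \<epsilon>' * exp (- r0 * t)" using Hall that by blast
      also have "\<dots> \<le> c0 * \<epsilon>0 * exp (- r0 * t)" using \<epsilon>' c0 by (intro mult_right_mono) auto
      finally show ?thesis .
    qed
    have obr: "rel_norm n (\<lambda>j. x t j - rel_star ps j) \<le> \<rho>1"
      if "T \<ge> 0" "is_solution n E isd k ps x T" "\<forall>j\<in>{2..n}. x 0 j = x0 j" "t \<in> {0..T}" for x T t
    proof -
      have "rel_norm n (\<lambda>j. x t j - rel_star ps j) \<le> c0 * \<epsilon>0 * exp (- r0 * t)" using ob that by blast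
      also have "\<dots> \<le> c0 * \<epsilon>0 * 1" using c0 \<epsilon>0 r0 that by (intro mult_left_mono) auto
      finally show ?thesis using c0e by simp
    qed
    have est_app: "\<forall>t\<in>{0..T}. (norm (w t - ws))^2 \<le> C1 * \<epsilon>0^2 * exp (- \<gamma> * t)"
      if T: "T \<ge> 0" and sol: "is_solution n E isd k ps x T" and xe: "\<forall>j\<in>{2..n}. x 0 j = x0 j"
        and der: "\<forall>t\<in>{0..T}. (w has_vector_derivative W t) (at t within {0..T})"
        and w0: "w 0 = x0 m"
        and fld: "\<forall>t\<in>{0..T}. norm (w t - ws) \<le> \<rho> \<longrightarrow> W t = g1 (- w t) + g2 (x t 2 - w t) - U1 (x t)"
      for T x w W
    proof -
      have fb: "\<forall>t\<in>{0..T}. norm (w t - ws) \<le> \<rho> \<longrightarrow> norm (W t - Hf (w t - ws)) \<le> P * c0 * \<epsilon>0 * exp (- r0 * t)"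
      proof (intro ballI impI)
        fix t assume t: "t \<in> {0..T}" and nw: "norm (w t - ws) \<le> \<rho>"
        have "norm (W t - Hf (w t - ws)) \<le> P * rel_norm n (\<lambda>j. x t j - rel_star ps j)"
          using fieldb[OF obr[OF T sol xe t] nw] fld t nw by simp
        also have "\<dots> \<le> P * (c0 * \<epsilon>0 * exp (- r0 * t))"
          using ob[OF T sol xe t] P by (intro mult_left_mono) auto
        finally show "norm (W t - Hf (w t - ws)) \<le> P * c0 * \<epsilon>0 * exp (- r0 * t)" by (simp add: algebra_simps)
      qed
      have i0: "norm (w 0 - ws) \<le> \<epsilon>0" using w0 init by simp
      have sm: "(1 + 2 * P\<^sup>2 * c0\<^sup>2 / (c * r0)) * \<epsilon>0\<^sup>2 < \<rho>\<^sup>2" using small unfolding C1_def .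
      show ?thesis unfolding C1_def \<gamma>_def
        by (rule est[OF T c K P c0 r0 \<epsilon>0 \<rho>(1) \<rho>(2) der fb neg' i0 sm])
    qed
    show "(\<exists>x. (\<forall>j\<in>{2..m}. x 0 j = x0 j) \<and> (\<forall>T\<ge>0. is_solution m E' isd' k' ps' x T)) \<and>
          (\<forall>x T. T \<ge> 0 \<longrightarrow> is_solution m E' isd' k' ps' x T \<longrightarrow> (\<forall>j\<in>{2..m}. x 0 j = x0 j) \<longrightarrow>
             (\<forall>t\<in>{0..T}. rel_norm m (\<lambda>j. x t j - rel_star ps' j)
                \<le> cc * rel_norm m (\<lambda>j. x0 j - rel_star ps' j) * exp (- rr * t)))"
    proof
      show "\<forall>x T. T \<ge> 0 \<longrightarrow> is_solution m E' isd' k' ps' x T \<longrightarrow> (\<forall>j\<in>{2..m}. x 0 j = x0 j) \<longrightarrow>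
             (\<forall>t\<in>{0..T}. rel_norm m (\<lambda>j. x t j - rel_star ps' j)
                \<le> cc * rel_norm m (\<lambda>j. x0 j - rel_star ps' j) * exp (- rr * t))"
      proof (intro allI impI ballI)
        fix x T t assume T: "T \<ge> 0" and sol: "is_solution m E' isd' k' ps' x T"
          and xe: "\<forall>j\<in>{2..m}. x 0 j = x0 j" and t: "t \<in> {0..T}"
        have soln: "is_solution n E isd k ps x T"
          and derm: "\<forall>t\<in>{0..T}. ((\<lambda>s. x s m) has_vector_derivative NEWF (x t)) (at t within {0..T})"
          using sol is_solution_split by auto
        have xe': "\<forall>j\<in>{2..n}. x 0 j = x0 j" using xe by auto
        have w0: "x 0 m = x0 m" using xe n2 by auto
        have fld: "\<forall>t\<in>{0..T}. norm (x t m - ws) \<le> \<rho> \<longrightarrow> NEWF (x t) = g1 (- x t m) + g2 (x t 2 - x t m) - U1 (x t)"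
          using NEWF_eq by blast
        have E: "\<forall>t\<in>{0..T}. (norm (x t m - ws))^2 \<le> C1 * \<epsilon>0^2 * exp (- \<gamma> * t)"
          by (rule est_app[OF T soln xe' derm w0 fld])
        have ent: "norm (x t m - ws) \<le> sqrt C1 * \<epsilon>0 * exp (- (\<gamma>/2) * t)"
        proof -
          have "(norm (x t m - ws))^2 \<le> (sqrt C1 * \<epsilon>0 * exp (- (\<gamma>/2) * t))^2"
          proof -
            have "(sqrt C1 * \<epsilon>0 * exp (- (\<gamma>/2) * t))^2 = C1 * \<epsilon>0^2 * exp (- \<gamma> * t)"
            proof -
              have ex: "(exp (- (\<gamma>/2) * t))^2 = exp (- \<gamma> * t)"
                by (simp add: power2_eq_square exp_add[symmetric])
              have sq: "(sqrt C1)^2 = C1" using C1 by simp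
              show ?thesis unfolding power_mult_distrib ex sq by simp
            qed
            then show ?thesis using E t by simp
          qed
          then show ?thesis by (rule power2_le_imp_le) (use C1 \<epsilon>0 in simp)
        qed
        have "rel_norm m (\<lambda>j. x t j - rel_star ps' j) \<le> rel_norm n (\<lambda>j. x t j - rel_star ps' j) + norm (x t m - rel_star ps' m)"
          using rel_norm_suc_le[of "\<lambda>j. x t j - rel_star ps' j"] by simp
        also have "\<dots> = rel_norm n (\<lambda>j. x t j - rel_star ps j) + norm (x t m - ws)" using rnn rsm by simp
        also have "\<dots> \<le> c0 * \<epsilon>0 * exp (- r0 * t) + sqrt C1 * \<epsilon>0 * exp (- (\<gamma>/2) * t)"
          using ob[OF T soln xe' t] ent by (rule add_mono)
        also have "\<dots> \<le> c0 * \<epsilon>0 * exp (- rr * t) + sqrt C1 * \<epsilon>0 * exp (- rr * t)"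
        proof -
          have tt: "t \<ge> 0" using t by simp
          have e1: "exp (- r0 * t) \<le> exp (- rr * t)" using mult_right_mono[OF rr(2) tt] by simp
          have e2: "exp (- (\<gamma>/2) * t) \<le> exp (- rr * t)" using mult_right_mono[OF rr(3) tt] by simp
          have p1: "c0 * \<epsilon>0 \<ge> 0" using c0 \<epsilon>0 by simp
          have p2: "sqrt C1 * \<epsilon>0 \<ge> 0" using C1 \<epsilon>0 by simp
          show ?thesis using mult_left_mono[OF e1 p1] mult_left_mono[OF e2 p2] by linarith
        qed
        also have "\<dots> = cc * \<epsilon>0 * exp (- rr * t)" unfolding cc_def by (simp add: algebra_simps)
        finally show "rel_norm m (\<lambda>j. x t j - rel_star ps' j) \<le> cc * rel_norm m (\<lambda>j. x0 j - rel_star ps' j) * exp (- rr * t)"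
          unfolding \<epsilon>0_def .
      qed
    next
      show "\<exists>x. (\<forall>j\<in>{2..m}. x 0 j = x0 j) \<and> (\<forall>T\<ge>0. is_solution m E' isd' k' ps' x T)"
      proof -
        obtain x where xe: "\<forall>j\<in>{2..n}. x 0 j = x0 j" and solall: "\<forall>T\<ge>0. is_solution n E isd k ps x T"
          using Hex by blast
        have xb: "rel_norm n (\<lambda>j. x s j - rel_star ps j) \<le> \<rho>1" if "s \<ge> 0" for s
          using obr[of s x s] solall xe that by auto
        have contx: "continuous_on {0..T} (\<lambda>s. x s j)" if "j \<in> {2..n}" for T j
        proof (cases "T \<ge> 0")
          case True
          then have "is_solution n E isd k ps x T" using solall by auto
          then show ?thesis unfolding is_solution_def using that
            by (intro continuous_on_vector_derivative[where f'="\<lambda>t. rel_field n E isd k ps (x t) j"]) auto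
        next
          case False then show ?thesis by simp
        qed
        define Pc where "Pc = clampv ws \<rho>"
        have \<rho>0: "\<rho> \<ge> 0" using \<rho> by simp
        have Pcb: "norm (Pc y - ws) \<le> 2 * \<rho>" for y unfolding Pc_def by (rule clamp_bound[OF \<rho>0])
        have Pcl: "norm (Pc y - Pc y') \<le> norm (y - y')" for y y' unfolding Pc_def by (rule clamp_lip[OF \<rho>0])
        have Pcc: "continuous_on UNIV Pc" unfolding Pc_def by (rule clamp_cont[OF \<rho>0])
        have Pci: "norm (y - ws) \<le> \<rho> \<Longrightarrow> Pc y = y" for y unfolding Pc_def by (rule clamp_id)
        have ball1: "- Pc y \<in> cball uu (norm uu / 2)" for y
        proof -
          have "dist uu (- Pc y) = norm (Pc y - ws)" unfolding wsu dist_norm by (simp add: algebra_simps)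
          then show ?thesis using Pcb[of y] \<rho> by simp
        qed
        have ball2: "x s 2 - Pc y \<in> cball vv (norm vv / 2)" if "s \<ge> 0" for s y
        proof -
          have d2: "norm (x s 2 - rel_star ps 2) \<le> \<rho>1"
            using rel_norm_comp[of 2 n "\<lambda>j. x s j - rel_star ps j"] n2 xb[OF that] by simp
          have "dist vv (x s 2 - Pc y) = norm ((Pc y - ws) - (x s 2 - rel_star ps 2))"
            unfolding dist_norm ws_def rel_star_def by (simp add: algebra_simps)
          also have "\<dots> \<le> norm (Pc y - ws) + norm (x s 2 - rel_star ps 2)" by (rule norm_triangle_ineq4)
          also have "\<dots> \<le> norm vv / 2" using Pcb[of y] d2 \<rho> \<rho>1 by linarith
          finally show ?thesis by simp
        qed
        define Fh where "Fh s y = g1 (- Pc y) + g2 (x s 2 - Pc y) - U1 (x s)" for s y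
        define M where "M = L1 * (norm uu / 2) + L2 * (norm vv / 2) + LU * \<rho>1"
        have c1u: "uu \<in> cball uu (norm uu / 2)" by simp
        have c2v: "vv \<in> cball vv (norm vv / 2)" by simp
        have Mb: "\<forall>s\<ge>0. \<forall>y. norm (Fh s y) \<le> M"
        proof (intro allI impI)
          fix s y :: real assume s: "s \<ge> 0"
          fix y :: pt
          have a1: "norm (g1 (- Pc y)) \<le> L1 * (norm uu / 2)"
          proof -
            have "norm (g1 (- Pc y)) = norm (g1 (- Pc y) - g1 uu)" using g1z by simp
            also have "\<dots> \<le> L1 * norm (- Pc y - uu)" by (rule lipschitz_on_normD[OF L1 ball1 c1u])
            also have "\<dots> \<le> L1 * (norm uu / 2)"
            proof -
              have "norm (- Pc y - uu) = dist uu (- Pc y)" unfolding dist_norm by (metis norm_minus_commute)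
              then have "norm (- Pc y - uu) \<le> norm uu / 2" using ball1[of y] by simp
              then show ?thesis using L1n by (intro mult_left_mono) auto
            qed
            finally show ?thesis .
          qed
          have a2: "norm (g2 (x s 2 - Pc y)) \<le> L2 * (norm vv / 2)"
          proof -
            have "norm (g2 (x s 2 - Pc y)) = norm (g2 (x s 2 - Pc y) - g2 vv)" using g2z by simp
            also have "\<dots> \<le> L2 * norm (x s 2 - Pc y - vv)" by (rule lipschitz_on_normD[OF L2 ball2[OF s] c2v])
            also have "\<dots> \<le> L2 * (norm vv / 2)"
            proof -
              have "norm (x s 2 - Pc y - vv) = dist vv (x s 2 - Pc y)" unfolding dist_norm by (metis norm_minus_commute)
              then have "norm (x s 2 - Pc y - vv) \<le> norm vv / 2" using ball2[OF s, of y] by simp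
              then show ?thesis using L2n by (intro mult_left_mono) auto
            qed
            finally show ?thesis .
          qed
          have a3: "norm (U1 (x s)) \<le> LU * \<rho>1"
          proof -
            have "norm (U1 (x s)) \<le> LU * rel_norm n (\<lambda>j. x s j - rel_star ps j)"
              using U1b xb[OF s] \<rho>1 by auto
            also have "\<dots> \<le> LU * \<rho>1" using xb[OF s] LU by (intro mult_left_mono) auto
            finally show ?thesis .
          qed
          have "norm (Fh s y) \<le> norm (g1 (- Pc y)) + norm (g2 (x s 2 - Pc y)) + norm (U1 (x s))"
            unfolding Fh_def
            using norm_triangle_ineq4[of "g1 (- Pc y) + g2 (x s 2 - Pc y)" "U1 (x s)"]
              norm_triangle_ineq[of "g1 (- Pc y)" "g2 (x s 2 - Pc y)"] by linarith
          then show "norm (Fh s y) \<le> M" unfolding M_def using a1 a2 a3 by linarith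
        qed
        have lip: "\<forall>s\<ge>0. \<forall>y y'. norm (Fh s y - Fh s y') \<le> (L1 + L2 + 1) * norm (y - y')"
        proof (intro allI impI)
          fix s :: real and y y' :: pt assume s: "s \<ge> 0"
          have "Fh s y - Fh s y' = (g1 (- Pc y) - g1 (- Pc y')) + (g2 (x s 2 - Pc y) - g2 (x s 2 - Pc y'))"
            unfolding Fh_def by (simp add: algebra_simps)
          then have "norm (Fh s y - Fh s y') \<le> norm (g1 (- Pc y) - g1 (- Pc y')) + norm (g2 (x s 2 - Pc y) - g2 (x s 2 - Pc y'))"
            by (metis norm_triangle_ineq)
          also have "\<dots> \<le> L1 * norm (- Pc y - - Pc y') + L2 * norm ((x s 2 - Pc y) - (x s 2 - Pc y'))"
            by (intro add_mono lipschitz_on_normD[OF L1 ball1 ball1] lipschitz_on_normD[OF L2 ball2[OF s] ball2[OF s]])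
          also have "\<dots> = L1 * norm (Pc y - Pc y') + L2 * norm (Pc y - Pc y')"
            by (simp add: norm_minus_commute algebra_simps)
          also have "\<dots> \<le> L1 * norm (y - y') + L2 * norm (y - y')"
            using Pcl[of y y'] L1n L2n by (intro add_mono mult_left_mono) auto
          also have "\<dots> \<le> (L1 + L2 + 1) * norm (y - y')" by (simp add: algebra_simps)
          finally show "norm (Fh s y - Fh s y') \<le> (L1 + L2 + 1) * norm (y - y')" .
        qed
        have cont: "\<forall>yf T. continuous_on {0..T} yf \<longrightarrow> continuous_on {0..T} (\<lambda>s. Fh s (yf s))"
        proof (intro allI impI)
          fix yf :: "real \<Rightarrow> pt" and T :: real
          assume yc: "continuous_on {0..T} yf"
          have pc: "continuous_on {0..T} (\<lambda>s. Pc (yf s))"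
            by (rule continuous_on_compose2[OF Pcc yc]) auto
          have g1c: "continuous_on (cball uu (norm uu / 2)) g1" using L1 by (rule lipschitz_on_continuous_on)
          have g2c: "continuous_on (cball vv (norm vv / 2)) g2" using L2 by (rule lipschitz_on_continuous_on)
          have c1: "continuous_on {0..T} (\<lambda>s. g1 (- Pc (yf s)))"
            by (rule continuous_on_compose2[OF g1c]) (use pc ball1 in \<open>auto intro!: continuous_intros\<close>)
          have x2c: "continuous_on {0..T} (\<lambda>s. x s 2)" using contx[of 2] n2 by simp
          have c2: "continuous_on {0..T} (\<lambda>s. g2 (x s 2 - Pc (yf s)))"
            by (rule continuous_on_compose2[OF g2c]) (use pc x2c ball2 in \<open>auto intro!: continuous_intros\<close>)
          have c3: "continuous_on {0..T} (\<lambda>s. U1 (x s))"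
          proof -
            have h1: "\<forall>j\<in>{2..n}. continuous_on {0..T} (\<lambda>s. x s j)" using contx by blast
            have h2: "\<forall>s\<in>{0..T}. rel_norm n (\<lambda>j. x s j - rel_star ps j) \<le> \<rho>U"
              using xb \<rho>1 by (meson atLeastAtMost_iff order_trans)
            show ?thesis using U1c[THEN spec[where x="{0..T}"], THEN spec[where x=x]] h1 h2 by blast
          qed
          show "continuous_on {0..T} (\<lambda>s. Fh s (yf s))" unfolding Fh_def
            by (intro continuous_on_diff continuous_on_add c1 c2 c3)
        qed
        have Lp: "L1 + L2 + 1 > 0" using L1n L2n by simp
        obtain wt where wt0: "wt 0 = x0 m"
          and wtd: "\<forall>T t. t \<in> {0..T} \<longrightarrow> (wt has_vector_derivative Fh t (wt t)) (at t within {0..T})"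
          using ode_exists[OF Lp Mb lip cont, of "x0 m"] by blast
        define X where "X s j = (if j = m then wt s else x s j)" for s j
        have Xloc: "\<forall>s. \<forall>i\<in>{2..n}. X s i = x s i" unfolding X_def by auto
        have "is_solution m E' isd' k' ps' X T" if T: "T \<ge> 0" for T
        proof -
          have soln: "is_solution n E isd k ps x T" using solall T by auto
          have solX: "is_solution n E isd k ps X T" using is_solution_local[OF Xloc] soln by simp
          have der: "\<forall>t\<in>{0..T}. (wt has_vector_derivative Fh t (wt t)) (at t within {0..T})" using wtd by auto
          have fld: "\<forall>t\<in>{0..T}. norm (wt t - ws) \<le> \<rho> \<longrightarrow> Fh t (wt t) = g1 (- wt t) + g2 (x t 2 - wt t) - U1 (x t)"
            unfolding Fh_def using Pci by auto
          have E: "\<forall>t\<in>{0..T}. (norm (wt t - ws))^2 \<le> C1 * \<epsilon>0^2 * exp (- \<gamma> * t)"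
            by (rule est_app[OF T soln xe der wt0 fld])
          have inb: "norm (wt t - ws) \<le> \<rho>" if t: "t \<in> {0..T}" for t
          proof -
            have "(norm (wt t - ws))^2 \<le> C1 * \<epsilon>0^2 * exp (- \<gamma> * t)" using E t by auto
            also have "\<dots> \<le> C1 * \<epsilon>0^2 * 1" using t \<gamma> C1 by (intro mult_left_mono) auto
            also have "\<dots> < \<rho>^2" using small by simp
            finally have "(norm (wt t - ws))^2 < \<rho>^2" .
            then have "norm (wt t - ws) < \<rho>" by (rule power2_less_imp_less) (use \<rho> in simp)
            then show ?thesis by simp
          qed
          have dm: "\<forall>t\<in>{0..T}. ((\<lambda>s. X s m) has_vector_derivative NEWF (X t)) (at t within {0..T})"
          proof
            fix t assume t: "t \<in> {0..T}"
            have ul: "U1 (X t) = U1 (x t)" by (rule U1_local) (use Xloc in blast)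
            have "NEWF (X t) = g1 (- wt t) + g2 (x t 2 - wt t) - U1 (x t)"
              unfolding NEWF_eq ul unfolding X_def using n2 by simp
            also have "\<dots> = Fh t (wt t)" using fld inb t by simp
            finally have nf: "NEWF (X t) = Fh t (wt t)" .
            have "(\<lambda>s. X s m) = wt" unfolding X_def by simp
            then show "((\<lambda>s. X s m) has_vector_derivative NEWF (X t)) (at t within {0..T})"
              using der t nf by simp
          qed
          show ?thesis unfolding is_solution_split using solX dm by blast
        qed
        moreover have "\<forall>j\<in>{2..m}. X 0 j = x0 j" unfolding X_def using xe wt0 by auto
        ultimately show ?thesis by blast
      qed
    qed
  qed
  show ?thesis unfolding loc_exp_stable_def
    apply (rule exI[where x=\<delta>], rule conjI[OF \<delta>])
    apply (rule exI[where x=cc], rule conjI[OF cc])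
    apply (rule exI[where x=rr], rule conjI[OF rr(1)])
    apply (rule allI)
    apply (rule goal)
    done
qed

end

theorem proposition3:
  fixes n :: nat and E :: "(nat \<times> nat) set" and isd :: "nat \<Rightarrow> bool"
    and k :: "nat \<times> nat \<Rightarrow> real" and ps :: "nat \<Rightarrow> pt"
    and d :: bool and kl kl1 :: real and q :: pt
  assumes n2: "n \<ge> 2"
    and E_sub: "E \<subseteq> {(i, j). i \<in> {1..n} \<and> j \<in> {1..n} \<and> i \<noteq> j}"
    and k_pos: "\<forall>e\<in>E. k e > 0"
    and ps_distinct: "inj_on ps {1..n}"
    and stable: "loc_exp_stable n E isd k ps"
    and kl_pos: "kl > 0" and kl1_pos: "kl1 > 0"
    and q_new: "q \<notin> ps ` {1..n}"
    and noncol: "\<not> collinear {ps 1, ps 2, q}"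
  shows "loc_exp_stable (Suc n) (E \<union> {(Suc n, 1), (Suc n, 2)}) (isd(Suc n := d))
           (k((Suc n, 1) := kl, (Suc n, 2) := kl1)) (ps(Suc n := q))"
  by (rule mrg.main[OF mrg.intro[OF n2 E_sub k_pos ps_distinct kl_pos kl1_pos noncol] stable])

end
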